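(* Let $s>\frac12$, $\sigma_1,\sigma_2<1$ with $\sigma_1+\sigma_2>0$. Let $\Psi$ be a locally bounded function on $\mathbb{R}^3$ satisfying $\Psi(\xi)\le\Psi(\xi-\eta)+\Psi(\eta)$ for all $\xi,\eta\in\mathbb{R}^3$. Assume $a_\Psi\in H^{\sigma_1,s}$ and $b_\Psi\in H^{\sigma_2,s}$. Then there is a constant $C$ depending only on $s,\sigma_1,\sigma_2$ such that $$\|(ab)_\Psi\|_{H^{\sigma_1+\sigma_2-1,s}}\le C\|a_\Psi\|_{H^{\sigma_1,s}}\|b_\Psi\|_{H^{\sigma_2,s}}.$$
   Context: For a function $f$, $f_\Psi=\mathcal F^{-1}(e^{\Psi}\hat f)$. For $\sigma<1$, $s\in\mathbb R$, the anisotropic Sobolev space $H^{\sigma,s}$ consists of tempered distributions $f$ on $\mathbb R^3$ with $\|f\|_{H^{\sigma,s}}^2=\int_{\mathbb{R}^3}|\xi_h|^{2\sigma}(1+|\xi_3|^2)^s|\hat f(\xi)|^2d\xi<\infty$, where $\xi=(\xi_h,\xi_3)$, $\xi_h\in\mathbb R^2$. *)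

theory Defs
  imports "HOL-Analysis.Analysis"
begin

text \<open>Everything is expressed on the Fourier side. A function on R^3 is identified
with its Fourier transform F :: real^3 => complex; xi_h = (xi$1, xi$2), xi_3 = xi$3.\<close>

definition hweight :: "real \<Rightarrow> real \<Rightarrow> real^3 \<Rightarrow> real" where
  "hweight \<sigma> s \<xi> = ((\<xi>$1)\<^sup>2 + (\<xi>$2)\<^sup>2) powr \<sigma> * (1 + (\<xi>$3)\<^sup>2) powr s"

definition Hsq :: "real \<Rightarrow> real \<Rightarrow> (real^3 \<Rightarrow> complex) \<Rightarrow> ennreal" where
  "Hsq \<sigma> s F = (\<integral>\<^sup>+ \<xi>. ennreal (hweight \<sigma> s \<xi> * (cmod (F \<xi>))\<^sup>2) \<partial>lborel)"

definition inH :: "real \<Rightarrow> real \<Rightarrow> (real^3 \<Rightarrow> complex) \<Rightarrow> bool" where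
  "inH \<sigma> s F \<longleftrightarrow> Hsq \<sigma> s F < \<infinity>"

definition Hnorm :: "real \<Rightarrow> real \<Rightarrow> (real^3 \<Rightarrow> complex) \<Rightarrow> real" where
  "Hnorm \<sigma> s F = sqrt (enn2real (Hsq \<sigma> s F))"

text \<open>Fourier transform of f_Psi, given the Fourier transform F of f.\<close>
definition fpsi :: "(real^3 \<Rightarrow> real) \<Rightarrow> (real^3 \<Rightarrow> complex) \<Rightarrow> real^3 \<Rightarrow> complex" where
  "fpsi \<Psi> F \<xi> = complex_of_real (exp (\<Psi> \<xi>)) * F \<xi>"

text \<open>Fourier transform of the product ab: (2 pi)^(-3) times the convolution of the transforms.\<close>
definition prod_hat :: "(real^3 \<Rightarrow> complex) \<Rightarrow> (real^3 \<Rightarrow> complex) \<Rightarrow> real^3 \<Rightarrow> complex" where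
  "prod_hat F G \<xi> = complex_of_real (1 / (2 * pi) ^ 3) * (\<integral> \<eta>. F (\<xi> - \<eta>) * G \<eta> \<partial>lborel)"

definition locally_bounded :: "(real^3 \<Rightarrow> real) \<Rightarrow> bool" where
  "locally_bounded \<Psi> \<longleftrightarrow> (\<forall>K. compact K \<longrightarrow> bounded (\<Psi> ` K))"

end

theory Submission
  imports Defs
begin


lemma nn_integral_reflect:
  fixes h :: "'a::euclidean_space \<Rightarrow> ennreal"
  assumes [measurable]: "h \<in> borel_measurable borel"
  shows "(\<integral>\<^sup>+x. h x \<partial>lborel) = (\<integral>\<^sup>+x. h (c - x) \<partial>lborel)"
proof -
  have "(\<integral>\<^sup>+x. h x \<partial>lborel) = (\<integral>\<^sup>+x. h x \<partial>density (distr lborel borel (\<lambda>x. c + (-1) *\<^sub>R x)) (\<lambda>_. \<bar>-1::real\<bar>^DIM('a)))"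
    by (subst lborel_affine[of "-1" c, symmetric]) auto
  also have "\<dots> = (\<integral>\<^sup>+x. h (c - x) \<partial>lborel)"
    by (simp add: nn_integral_density nn_integral_distr)
  finally show ?thesis .
qed

definition T3 :: "real^3 \<Rightarrow> (real \<times> real) \<times> real" where
  "T3 x = ((x$1, x$2), x$3)"

lemma T3_meas[measurable]: "T3 \<in> borel_measurable borel"
  unfolding T3_def by measurable

lemma n3: "(1::3) \<noteq> 2" "(1::3) \<noteq> 3" "(2::3) \<noteq> 3" by simp_all

lemma Basis_vec3: "(Basis::(real^3) set) = {axis 1 1, axis 2 1, axis 3 1}"
    by (auto simp: Basis_vec_def UNIV_3)

lemma axis3_neq: "axis 1 (1::real) \<noteq> (axis 2 1 :: real^3)" "axis 1 (1::real) \<noteq> (axis 3 1 :: real^3)" "axis 2 (1::real) \<noteq> (axis 3 1 :: real^3)"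
  using n3 by (auto simp: axis_eq_axis)

lemma prod_Basis_vec3: "(\<Prod>b\<in>(Basis::(real^3) set). f b) = f (axis 1 1) * (f (axis 2 1) * f (axis 3 1))"
  unfolding Basis_vec3 using axis3_neq by simp

lemma vec3_box: "l1 \<le> u1 \<Longrightarrow> l2 \<le> u2 \<Longrightarrow> l3 \<le> u3 \<Longrightarrow>
  emeasure lborel (box (vector [l1,l2,l3]) (vector [u1,u2,u3]) :: (real^3) set) = ennreal ((u1-l1)*(u2-l2)*(u3-l3))"
  apply (subst emeasure_lborel_box_eq)
  apply (subst if_P)
  subgoal unfolding Basis_vec_def by (auto simp: inner_axis forall_3)
  apply (subst prod_Basis_vec3)
  apply (simp only: inner_axis vector_minus_component vector_3 real_inner_1_right mult.assoc)
  done

lemma Basis_prod3: "(Basis :: ((real\<times>real)\<times>real) set) = {((1,0),0), ((0,1),0), ((0,0),1)}"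
  by (auto simp: Basis_prod_def zero_prod_def)

lemma prod_Basis_prod3: "(\<Prod>b\<in>(Basis :: ((real\<times>real)\<times>real) set). f b) = f ((1,0),0) * (f ((0,1),0) * f ((0,0),1))"
  unfolding Basis_prod3 by simp

lemma lborel3: "distr (lborel::(real^3) measure) borel T3 = lborel"
proof (rule lborel_eqI[symmetric])
  fix l u :: "(real \<times> real) \<times> real"
  assume le: "\<And>b. b \<in> Basis \<Longrightarrow> l \<bullet> b \<le> u \<bullet> b"
  obtain l1 l2 l3 where l: "l = ((l1,l2),l3)" by (metis prod.exhaust)
  obtain u1 u2 u3 where u: "u = ((u1,u2),u3)" by (metis prod.exhaust)
  have les: "l1 \<le> u1" "l2 \<le> u2" "l3 \<le> u3" using le[of "((1,0),0)"] le[of "((0,1),0)"] le[of "((0,0),1)"]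
      by (auto simp: Basis_prod3 l u)
  have "T3 -` box l u = box (vector [l1,l2,l3]) (vector [u1,u2,u3])"
    unfolding set_eq_iff vimage_eq mem_box_cart by (auto simp: l u T3_def box_def Basis_prod3 forall_3)
  then have "emeasure (distr lborel borel T3) (box l u) = emeasure lborel (box (vector [l1,l2,l3]) (vector [u1,u2,u3]) :: (real^3) set)"
    by (subst emeasure_distr) auto
  also have "\<dots> = ennreal ((u1-l1)*(u2-l2)*(u3-l3))" using les by (rule vec3_box)
  also have "\<dots> = (\<Prod>b\<in>Basis. (u - l) \<bullet> b)"
    unfolding prod_Basis_prod3 by (simp add: l u mult.assoc)
  finally show "emeasure (distr lborel borel T3) (box l u) = (\<Prod>b\<in>Basis. (u - l) \<bullet> b)" .
next show "sets (distr (lborel::(real^3) measure) borel T3) = sets borel" by simp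
qed

lemma nn_integral_T3:
  fixes h :: "(real \<times> real) \<times> real \<Rightarrow> ennreal"
  assumes [measurable]: "h \<in> borel_measurable borel"
  shows "(\<integral>\<^sup>+x. h (T3 x) \<partial>lborel) = (\<integral>\<^sup>+p. h p \<partial>lborel)"
  by (subst lborel3[symmetric]) (simp add: nn_integral_distr)

lemma nn_integral_split3:
  fixes H :: "real \<times> real \<Rightarrow> ennreal" and V :: "real \<Rightarrow> ennreal"
  assumes [measurable]: "H \<in> borel_measurable borel" "V \<in> borel_measurable borel"
  shows "(\<integral>\<^sup>+(x::real^3). H (x$1, x$2) * V (x$3) \<partial>lborel) = (\<integral>\<^sup>+p. H p \<partial>lborel) * (\<integral>\<^sup>+t. V t \<partial>lborel)"
proof -
  have "(\<integral>\<^sup>+(x::real^3). H (x$1, x$2) * V (x$3) \<partial>lborel) = (\<integral>\<^sup>+x. (\<lambda>(p,t). H p * V t) (T3 x) \<partial>lborel)"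
    by (simp add: T3_def)
  also have "\<dots> = (\<integral>\<^sup>+q. (\<lambda>(p,t). H p * V t) q \<partial>(lborel \<Otimes>\<^sub>M lborel))"
  proof -
    have "(\<lambda>(p,t). H p * V t) \<in> borel_measurable (borel \<Otimes>\<^sub>M borel)" by measurable
    then have [measurable]: "(\<lambda>(p,t). H p * V t) \<in> borel_measurable borel" by (simp add: borel_prod)
    show ?thesis by (subst nn_integral_T3) (auto simp: lborel_prod)
  qed
  also have "\<dots> = (\<integral>\<^sup>+p. \<integral>\<^sup>+t. H p * V t \<partial>lborel \<partial>lborel)"
    using lborel.nn_integral_fst[of "\<lambda>(p,t). H p * V t"] by simp
  also have "\<dots> = (\<integral>\<^sup>+p. H p * \<integral>\<^sup>+t. V t \<partial>lborel \<partial>lborel)"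
    by (simp add: nn_integral_cmult)
  also have "\<dots> = (\<integral>\<^sup>+p. H p \<partial>lborel) * (\<integral>\<^sup>+t. V t \<partial>lborel)"
    by (simp add: nn_integral_multc)
  finally show ?thesis .
qed



lemma nn_integral_powr_0c:
  fixes q \<rho> :: real assumes q: "q > -1" and \<rho>: "\<rho> \<ge> 0"
  shows "(\<integral>\<^sup>+x. ennreal (x powr q) * indicator {0..\<rho>} x \<partial>lborel) = ennreal (\<rho> powr (q+1) / (q+1))"
  by (rule nn_integral_has_integral_lebesgue'[OF _ has_integral_powr_from_0[OF q \<rho>]]) auto

lemma nn_integral_abs_powr_sym:
  fixes q \<rho> :: real assumes q: "q > -1" and \<rho>: "\<rho> \<ge> 0"
  shows "(\<integral>\<^sup>+x. ennreal (\<bar>x\<bar> powr q) * indicator {-\<rho>..\<rho>} x \<partial>lborel) \<le> ennreal (2 * (\<rho> powr (q+1) / (q+1)))"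
proof -
  have "(\<integral>\<^sup>+x. ennreal (\<bar>x\<bar> powr q) * indicator {-\<rho>..\<rho>} x \<partial>lborel)
     \<le> (\<integral>\<^sup>+x. ennreal (x powr q) * indicator {0..\<rho>} x + ennreal ((-x) powr q) * indicator {0..\<rho>} (-x) \<partial>lborel)"
    by (intro nn_integral_mono) (auto simp: indicator_def)
  also have "\<dots> = (\<integral>\<^sup>+x. ennreal (x powr q) * indicator {0..\<rho>} x \<partial>lborel) + (\<integral>\<^sup>+x. ennreal ((-x) powr q) * indicator {0..\<rho>} (-x) \<partial>lborel)"
    by (subst nn_integral_add) auto
  also have "(\<integral>\<^sup>+x. ennreal ((-x) powr q) * indicator {0..\<rho>} (-x) \<partial>lborel) = (\<integral>\<^sup>+x. ennreal (x powr q) * indicator {0..\<rho>} x \<partial>lborel)"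
    using nn_integral_reflect[of "\<lambda>x. ennreal (x powr q) * indicator {0..\<rho>} x" 0] by simp
  also have "(\<integral>\<^sup>+x. ennreal (x powr q) * indicator {0..\<rho>} x \<partial>lborel) = ennreal (\<rho> powr (q+1) / (q+1))"
    by (rule nn_integral_powr_0c[OF q \<rho>])
  finally show ?thesis using q by (simp add: ennreal_plus[symmetric] del: ennreal_plus)
qed

lemma nn_integral_powr_inf:
  fixes ex :: real assumes "ex < -1"
  shows "(\<integral>\<^sup>+x. ennreal (x powr ex) * indicator {1..} x \<partial>lborel) = ennreal ((-1) / (ex + 1))"
  using nn_integral_has_integral_lebesgue'[OF _ has_integral_powr_to_inf[OF assms, of 1]] by simp

lemma vert_finite:
  fixes s :: real assumes s: "s > 1/2"
  shows "(\<integral>\<^sup>+t. ennreal ((1 + t\<^sup>2) powr (-s)) \<partial>lborel) < \<infinity>"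
proof -
  have pw: "ennreal ((1 + t\<^sup>2) powr (-s)) \<le> indicator {-1..1} t + ennreal (t powr (- 2 * s)) * indicator {1..} t
     + ennreal ((-t) powr (- 2 * s)) * indicator {1..} (-t)" for t
  proof (cases "\<bar>t\<bar> \<le> 1")
    case True
    have "(1 + t\<^sup>2) powr (-s) \<le> 1"
      using powr_mono2'[of "-s" 1 "1+t\<^sup>2"] s by simp
    then have "ennreal ((1 + t\<^sup>2) powr (-s)) \<le> 1" by (simp add: ennreal_le_1)
    also have "(1::ennreal) \<le> 1 + (ennreal (t powr (- 2 * s)) * indicator {1..} t + ennreal ((-t) powr (- 2 * s)) * indicator {1..} (-t))"
      by (metis le_iff_add)
    also have "indicator {-1..1} t = (1::ennreal)" using True by (auto simp: indicator_def)
    ultimately show ?thesis by (simp add: add.assoc)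
  next
    case False
    have "(1 + t\<^sup>2) powr (-s) \<le> (t\<^sup>2) powr (-s)"
      using s False by (rule_tac powr_mono2') auto
    also have "(t\<^sup>2) powr (-s) = \<bar>t\<bar> powr (- 2 * s)"
    proof -
      have e: "(t\<^sup>2) = \<bar>t\<bar> powr 2" using False by (simp add: powr_realpow')
      show ?thesis unfolding e powr_powr by simp
    qed
    finally have "(1 + t\<^sup>2) powr (-s) \<le> \<bar>t\<bar> powr (- 2 * s)" .
    then show ?thesis using False
      by (cases "t \<ge> 0") (auto simp: indicator_def)
  qed
  have "(\<integral>\<^sup>+t. ennreal ((1 + t\<^sup>2) powr (-s)) \<partial>lborel) \<le> (\<integral>\<^sup>+t. indicator {-1..1} t + ennreal (t powr (- 2 * s)) * indicator {1..} t
     + ennreal ((-t) powr (- 2 * s)) * indicator {1..} (-t) \<partial>lborel)"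
    by (intro nn_integral_mono pw)
  also have "\<dots> = 2 + (\<integral>\<^sup>+t. ennreal (t powr (- 2 * s)) * indicator {1..} t \<partial>lborel)
     + (\<integral>\<^sup>+t. ennreal ((-t) powr (- 2 * s)) * indicator {1..} (-t) \<partial>lborel)"
    by (simp add: nn_integral_add)
  also have "(\<integral>\<^sup>+t. ennreal ((-t) powr (- 2 * s)) * indicator {1..} (-t) \<partial>lborel) = (\<integral>\<^sup>+t. ennreal (t powr (- 2 * s)) * indicator {1..} t \<partial>lborel)"
    using nn_integral_reflect[of "\<lambda>t. ennreal (t powr (- 2 * s)) * indicator {1..} t" 0] by simp
  also have "(\<integral>\<^sup>+t. ennreal (t powr (- 2 * s)) * indicator {1..} t \<partial>lborel) = ennreal ((-1) / (- 2 * s + 1))"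
    using s by (intro nn_integral_powr_inf) auto
  finally show ?thesis by (rule le_less_trans) (simp add: less_top[symmetric])
qed



lemma nn_integral_translate:
  fixes h :: "'a::euclidean_space \<Rightarrow> ennreal"
  assumes [measurable]: "h \<in> borel_measurable borel"
  shows "(\<integral>\<^sup>+x. h (x - v) \<partial>lborel) = (\<integral>\<^sup>+x. h x \<partial>lborel)"
proof -
  have "(\<integral>\<^sup>+x. h x \<partial>lborel) = (\<integral>\<^sup>+x. h (0 - x) \<partial>lborel)" by (rule nn_integral_reflect) simp
  also have "\<dots> = (\<integral>\<^sup>+x. h (0 - (v - x)) \<partial>lborel)" by (rule nn_integral_reflect) simp
  finally show ?thesis by simp
qed

lemma nn_integral_prod2:
  fixes F G :: "real \<Rightarrow> ennreal"
  assumes [measurable]: "F \<in> borel_measurable borel" "G \<in> borel_measurable borel"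
  shows "(\<integral>\<^sup>+(x::real\<times>real). F (fst x) * G (snd x) \<partial>lborel) = (\<integral>\<^sup>+t. F t \<partial>lborel) * (\<integral>\<^sup>+t. G t \<partial>lborel)"
proof -
  have "(\<integral>\<^sup>+(x::real\<times>real). F (fst x) * G (snd x) \<partial>lborel) = (\<integral>\<^sup>+x. F (fst x) * G (snd x) \<partial>(lborel \<Otimes>\<^sub>M lborel))"
    by (simp add: lborel_prod)
  also have "\<dots> = (\<integral>\<^sup>+a. \<integral>\<^sup>+b. F a * G b \<partial>lborel \<partial>lborel)"
    using lborel.nn_integral_fst[of "\<lambda>x. F (fst x) * G (snd x)"] by simp
  also have "\<dots> = (\<integral>\<^sup>+a. F a * \<integral>\<^sup>+b. G b \<partial>lborel \<partial>lborel)"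
    by (simp add: nn_integral_cmult)
  also have "\<dots> = (\<integral>\<^sup>+t. F t \<partial>lborel) * (\<integral>\<^sup>+t. G t \<partial>lborel)"
    by (simp add: nn_integral_multc)
  finally show ?thesis .
qed

lemma emeasure_cball2: "r \<ge> 0 \<Longrightarrow> emeasure lborel (cball (c::real\<times>real) r) = ennreal (unit_ball_vol 2 * r ^ 2)"
  using emeasure_cball[where c=c and r=r] by (simp add: power2_eq_square)

lemma ball_bound:
  fixes p :: real assumes p: "p > -2"
  shows "\<exists>c\<ge>0. \<forall>\<rho>>0. (\<integral>\<^sup>+(x::real\<times>real). ennreal (norm x powr p) * indicator (cball 0 \<rho>) x \<partial>lborel) \<le> ennreal (c * \<rho> powr (p+2))"
proof (cases "p \<ge> 0")
  case True
  show ?thesis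
  proof (intro exI[of _ "unit_ball_vol 2"] conjI allI impI)
    fix \<rho> :: real assume \<rho>: "\<rho> > 0"
    have "(\<integral>\<^sup>+(x::real\<times>real). ennreal (norm x powr p) * indicator (cball 0 \<rho>) x \<partial>lborel)
       \<le> (\<integral>\<^sup>+(x::real\<times>real). ennreal (\<rho> powr p) * indicator (cball 0 \<rho>) x \<partial>lborel)"
      using True by (intro nn_integral_mono) (auto simp: indicator_def intro!: powr_mono2)
    also have "\<dots> = ennreal (\<rho> powr p) * ennreal (unit_ball_vol 2 * \<rho> ^ 2)"
      using \<rho> by (simp add: nn_integral_cmult_indicator emeasure_cball2)
    also have "\<dots> = ennreal (unit_ball_vol 2 * \<rho> powr (p+2))"
      using \<rho> by (simp add: ennreal_mult'[symmetric] powr_add powr_realpow' mult_ac)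
    finally show "(\<integral>\<^sup>+(x::real\<times>real). ennreal (norm x powr p) * indicator (cball 0 \<rho>) x \<partial>lborel) \<le> ennreal (unit_ball_vol 2 * \<rho> powr (p+2))" .
  qed simp
next
  case False
  define q where "q = p/2"
  have q: "q > -1" "q < 0" using p False by (auto simp: q_def)
  show ?thesis
  proof (intro exI[of _ "4 / (q+1)^2"] conjI allI impI)
    fix \<rho> :: real assume \<rho>: "\<rho> > 0"
    have AE: "AE x in lborel. fst x \<noteq> (0::real) \<and> snd x \<noteq> (0::real)"
    proof -
      have "AE x in lborel. (x::real\<times>real) \<bullet> (1,0) \<noteq> 0" by (rule AE_lborel_inner_neq) (simp add: Basis_prod_def)
      moreover have "AE x in lborel. (x::real\<times>real) \<bullet> (0,1) \<noteq> 0" by (rule AE_lborel_inner_neq) (simp add: Basis_prod_def)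
      ultimately show ?thesis by eventually_elim (auto simp: inner_prod_def)
    qed
    have "(\<integral>\<^sup>+(x::real\<times>real). ennreal (norm x powr p) * indicator (cball 0 \<rho>) x \<partial>lborel)
       \<le> (\<integral>\<^sup>+(x::real\<times>real). (ennreal (\<bar>fst x\<bar> powr q) * indicator {-\<rho>..\<rho>} (fst x)) * (ennreal (\<bar>snd x\<bar> powr q) * indicator {-\<rho>..\<rho>} (snd x)) \<partial>lborel)"
    proof (intro nn_integral_mono_AE, use AE in eventually_elim)
      case (elim x)
      obtain a b where x: "x = (a,b)" by (cases x)
      have a: "a \<noteq> 0" and b: "b \<noteq> 0" using elim by (auto simp: x)
      have na: "\<bar>a\<bar> \<le> norm x" and nb: "\<bar>b\<bar> \<le> norm x" unfolding x norm_Pair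
        by (auto intro!: real_le_rsqrt)
      have "norm x powr p = norm x powr q * norm x powr q" by (simp add: q_def powr_add[symmetric])
      also have "\<dots> \<le> \<bar>a\<bar> powr q * \<bar>b\<bar> powr q"
        using q a b na nb by (intro mult_mono powr_mono2') auto
      finally have 1: "norm x powr p \<le> \<bar>a\<bar> powr q * \<bar>b\<bar> powr q" .
      show ?case
      proof (cases "x \<in> cball 0 \<rho>")
        case True
        then have "\<bar>a\<bar> \<le> \<rho>" "\<bar>b\<bar> \<le> \<rho>" using na nb by auto
        then show ?thesis using 1 by (auto simp: x indicator_def ennreal_mult'[symmetric] abs_le_iff intro!: ennreal_leI)
      qed simp
    qed
    also have "\<dots> = (\<integral>\<^sup>+t. ennreal (\<bar>t\<bar> powr q) * indicator {-\<rho>..\<rho>} t \<partial>lborel) * (\<integral>\<^sup>+t. ennreal (\<bar>t\<bar> powr q) * indicator {-\<rho>..\<rho>} t \<partial>lborel)"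
      by (rule nn_integral_prod2[where F="\<lambda>t. ennreal (\<bar>t\<bar> powr q) * indicator {-\<rho>..\<rho>} t" and G="\<lambda>t. ennreal (\<bar>t\<bar> powr q) * indicator {-\<rho>..\<rho>} t"]) auto
    also have "\<dots> \<le> ennreal (2 * (\<rho> powr (q+1) / (q+1))) * ennreal (2 * (\<rho> powr (q+1) / (q+1)))"
      using q \<rho> by (intro mult_mono nn_integral_abs_powr_sym) auto
    also have "\<dots> = ennreal (4 / (q+1)^2 * \<rho> powr (p+2))"
    proof -
      have "\<rho> powr (q+1) * \<rho> powr (q+1) = \<rho> powr (p+2)" by (simp add: q_def powr_add[symmetric])
      then show ?thesis using q \<rho> by (simp add: ennreal_mult'[symmetric] power2_eq_square field_simps)
    qed
    finally show "(\<integral>\<^sup>+(x::real\<times>real). ennreal (norm x powr p) * indicator (cball 0 \<rho>) x \<partial>lborel) \<le> ennreal (4 / (q+1)^2 * \<rho> powr (p+2))" .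
  qed simp
qed



lemma cball_borel[measurable]: "cball (c::'a::euclidean_space) r \<in> sets borel"
  by (simp add: borel_closed)

lemma powr_between:
  fixes r x e :: real assumes r: "0 < r" and x: "r/2 \<le> x" "x \<le> 2*r"
  shows "x powr e \<le> 2 powr \<bar>e\<bar> * r powr e"
proof (cases "e \<ge> 0")
  case True
  have "x powr e \<le> (2*r) powr e" using True x r by (intro powr_mono2) auto
  also have "\<dots> = 2 powr \<bar>e\<bar> * r powr e" using True by (simp add: powr_mult)
  finally show ?thesis .
next
  case False
  have "x powr e \<le> (r/2) powr e" using False x r powr_mono2'[of e "r/2" x] by linarith
  also have "\<dots> = 2 powr \<bar>e\<bar> * r powr e"
  proof -
    have "\<bar>e\<bar> = - e" using False by simp
    then have "2 powr \<bar>e\<bar> = 1 / 2 powr e" by (simp add: powr_minus_divide)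
    then show ?thesis by (simp add: powr_divide)
  qed
  finally show ?thesis .
qed

lemma horiz_bound:
  fixes \<sigma> \<tau> :: real assumes s1: "\<sigma> < 1" and s2: "\<tau> < 1" and s12: "\<sigma> + \<tau> > 0"
  shows "\<exists>C. \<forall>v::real\<times>real. (\<integral>\<^sup>+u. ennreal (norm u powr (2*(\<sigma>+\<tau>-1)) * norm (u-v) powr (-2*\<sigma>) * norm v powr (-2*\<tau>))
            * indicator {u. norm (u-v) \<le> norm v} u \<partial>lborel) \<le> ennreal C"
proof -
  define a where "a = \<sigma>+\<tau>-1"
  obtain c1 where c1: "c1 \<ge> 0" "\<And>\<rho>. \<rho>>0 \<Longrightarrow> (\<integral>\<^sup>+(x::real\<times>real). ennreal (norm x powr (-2*\<sigma>)) * indicator (cball 0 \<rho>) x \<partial>lborel) \<le> ennreal (c1 * \<rho> powr (-2*\<sigma>+2))"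
    using ball_bound[of "-2*\<sigma>"] s1 by auto
  obtain c2 where c2: "c2 \<ge> 0" "\<And>\<rho>. \<rho>>0 \<Longrightarrow> (\<integral>\<^sup>+(x::real\<times>real). ennreal (norm x powr (2*a)) * indicator (cball 0 \<rho>) x \<partial>lborel) \<le> ennreal (c2 * \<rho> powr (2*a+2))"
    using ball_bound[of "2*a"] s12 by (auto simp: a_def)
  define K1 where "K1 = 2 powr \<bar>2*a\<bar>"
  define K2 where "K2 = 2 powr \<bar>-2*\<sigma>\<bar>"
  define C where "C = K1*c1*(1/2) powr (-2*\<sigma>+2) + K2*c2*2 powr (2*a+2)"
  have C0: "C \<ge> 0" using c1 c2 by (simp add: C_def K1_def K2_def)
  show ?thesis
  proof (intro exI[of _ C] allI)
    fix v :: "real\<times>real"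
    define r where "r = norm v"
    show "(\<integral>\<^sup>+u. ennreal (norm u powr (2*(\<sigma>+\<tau>-1)) * norm (u-v) powr (-2*\<sigma>) * norm v powr (-2*\<tau>))
            * indicator {u. norm (u-v) \<le> norm v} u \<partial>lborel) \<le> ennreal C"
    proof (cases "r = 0")
      case True
      then show ?thesis by (simp add: r_def)
    next
      case False
      then have r: "r > 0" by (simp add: r_def)
      define A1 where "A1 = K1 * r powr (2*a) * r powr (-2*\<tau>)"
      define A2 where "A2 = K2 * r powr (-2*\<sigma>) * r powr (-2*\<tau>)"
      have A0: "A1 \<ge> 0" "A2 \<ge> 0" by (auto simp: A1_def A2_def K1_def K2_def)
      have pw: "ennreal (norm u powr (2*(\<sigma>+\<tau>-1)) * norm (u-v) powr (-2*\<sigma>) * norm v powr (-2*\<tau>))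
            * indicator {u. norm (u-v) \<le> norm v} u \<le>
           ennreal A1 * (ennreal (norm (u-v) powr (-2*\<sigma>)) * indicator (cball 0 (r/2)) (u-v))
         + ennreal A2 * (ennreal (norm u powr (2*a)) * indicator (cball 0 (2*r)) u)" for u
      proof (cases "norm (u-v) \<le> r")
        case False then show ?thesis by (simp add: r_def)
      next
        case d: True
        have tri1: "norm u \<le> norm (u-v) + r" using norm_triangle_ineq[of "u-v" v] by (simp add: r_def)
        have tri2: "r \<le> norm u + norm (u-v)" using norm_triangle_ineq[of u "v-u"] by (simp add: r_def norm_minus_commute)
        show ?thesis
        proof (cases "norm (u-v) \<le> r/2")
          case True
          have "norm u powr (2*a) \<le> K1 * r powr (2*a)" unfolding K1_def
            using tri1 tri2 True r by (intro powr_between) auto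
          then have "norm u powr (2*(\<sigma>+\<tau>-1)) * norm (u-v) powr (-2*\<sigma>) * norm v powr (-2*\<tau>)
              \<le> A1 * norm (u-v) powr (-2*\<sigma>)"
          proof -
            have "norm u powr (2*a) * norm (u-v) powr (-2*\<sigma>) * norm v powr (-2*\<tau>) \<le> (K1 * r powr (2*a)) * norm (u-v) powr (-2*\<sigma>) * norm v powr (-2*\<tau>)"
              using \<open>norm u powr (2*a) \<le> K1 * r powr (2*a)\<close> by (intro mult_right_mono) auto
            then show ?thesis unfolding A1_def r_def a_def by (simp add: mult_ac)
          qed
          then have "ennreal (norm u powr (2*(\<sigma>+\<tau>-1)) * norm (u-v) powr (-2*\<sigma>) * norm v powr (-2*\<tau>))
            * indicator {u. norm (u-v) \<le> norm v} u \<le>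
           ennreal A1 * (ennreal (norm (u-v) powr (-2*\<sigma>)) * indicator (cball 0 (r/2)) (u-v))"
            using True d A0 by (simp add: r_def indicator_def ennreal_mult'[symmetric] ennreal_leI)
          then show ?thesis by (rule order_trans) simp
        next
          case False
          have "norm (u-v) powr (-2*\<sigma>) \<le> K2 * r powr (-2*\<sigma>)" unfolding K2_def
            using False d r by (intro powr_between) auto
          then have "norm u powr (2*(\<sigma>+\<tau>-1)) * norm (u-v) powr (-2*\<sigma>) * norm v powr (-2*\<tau>)
              \<le> A2 * norm u powr (2*a)"
          proof -
            have "norm u powr (2*a) * norm (u-v) powr (-2*\<sigma>) * norm v powr (-2*\<tau>) \<le> norm u powr (2*a) * (K2 * r powr (-2*\<sigma>)) * norm v powr (-2*\<tau>)"
              using \<open>norm (u-v) powr (-2*\<sigma>) \<le> K2 * r powr (-2*\<sigma>)\<close> by (intro mult_right_mono mult_left_mono) auto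
            then show ?thesis unfolding A2_def r_def a_def by (simp add: mult_ac)
          qed
          moreover have "norm u \<le> 2*r" using tri1 d by simp
          ultimately have "ennreal (norm u powr (2*(\<sigma>+\<tau>-1)) * norm (u-v) powr (-2*\<sigma>) * norm v powr (-2*\<tau>))
            * indicator {u. norm (u-v) \<le> norm v} u \<le>
           ennreal A2 * (ennreal (norm u powr (2*a)) * indicator (cball 0 (2*r)) u)"
            using d A0 by (simp add: r_def indicator_def ennreal_mult'[symmetric] ennreal_leI)
          then show ?thesis by (rule order_trans) simp
        qed
      qed
      have "(\<integral>\<^sup>+u. ennreal (norm u powr (2*(\<sigma>+\<tau>-1)) * norm (u-v) powr (-2*\<sigma>) * norm v powr (-2*\<tau>))
            * indicator {u. norm (u-v) \<le> norm v} u \<partial>lborel) \<le>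
         (\<integral>\<^sup>+u. ennreal A1 * (ennreal (norm (u-v) powr (-2*\<sigma>)) * indicator (cball 0 (r/2)) (u-v))
         + ennreal A2 * (ennreal (norm u powr (2*a)) * indicator (cball 0 (2*r)) u) \<partial>lborel)"
        by (intro nn_integral_mono pw)
      also have "\<dots> = ennreal A1 * (\<integral>\<^sup>+u. ennreal (norm (u-v) powr (-2*\<sigma>)) * indicator (cball 0 (r/2)) (u-v) \<partial>lborel)
         + ennreal A2 * (\<integral>\<^sup>+(u::real\<times>real). ennreal (norm u powr (2*a)) * indicator (cball 0 (2*r)) u \<partial>lborel)"
      proof -
        have [measurable]: "Measurable.pred borel (\<lambda>x. x - v \<in> cball 0 (r/2))"
          unfolding mem_cball_0 by measurable
        have [measurable]: "(\<lambda>u. ennreal (norm (u-v) powr (-2*\<sigma>)) * indicator (cball 0 (r/2)) (u-v)) \<in> borel_measurable lborel" by measurable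
        have [measurable]: "(\<lambda>u. ennreal (norm u powr (2*a)) * indicator (cball 0 (2*r)) u) \<in> borel_measurable lborel" by measurable
        show ?thesis
          apply (subst nn_integral_add)
            apply measurable
          apply (subst nn_integral_cmult, measurable)+
          done
      qed
      also have "(\<integral>\<^sup>+u. ennreal (norm (u-v) powr (-2*\<sigma>)) * indicator (cball 0 (r/2)) (u-v) \<partial>lborel)
          = (\<integral>\<^sup>+(u::real\<times>real). ennreal (norm u powr (-2*\<sigma>)) * indicator (cball 0 (r/2)) u \<partial>lborel)"
        by (rule nn_integral_translate[where h="\<lambda>u. ennreal (norm u powr (-2*\<sigma>)) * indicator (cball 0 (r/2)) u"]) simp
      also have "ennreal A1 * \<dots> + ennreal A2 * (\<integral>\<^sup>+(u::real\<times>real). ennreal (norm u powr (2*a)) * indicator (cball 0 (2*r)) u \<partial>lborel)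
          \<le> ennreal A1 * ennreal (c1 * (r/2) powr (-2*\<sigma>+2)) + ennreal A2 * ennreal (c2 * (2*r) powr (2*a+2))"
        using r by (intro add_mono mult_left_mono c1(2) c2(2)) auto
      also have "\<dots> = ennreal C"
      proof -
        have e1: "A1 * (c1 * (r/2) powr (-2*\<sigma>+2)) = K1*c1*(1/2) powr (-2*\<sigma>+2) * r powr (2*a + -2*\<tau> + (-2*\<sigma>+2))"
        proof -
          have h: "(r/2) powr (-2*\<sigma>+2) = r powr (-2*\<sigma>+2) * (1/2) powr (-2*\<sigma>+2)"
            using powr_mult[of r "1/2" "-2*\<sigma>+2"] by simp
          show ?thesis unfolding A1_def h by (simp only: powr_add mult_ac)
        qed
        have e2: "A2 * (c2 * (2*r) powr (2*a+2)) = K2*c2*2 powr (2*a+2) * r powr (-2*\<sigma> + -2*\<tau> + (2*a+2))"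
        proof -
          have h: "(2*r) powr (2*a+2) = 2 powr (2*a+2) * r powr (2*a+2)"
            using powr_mult[of 2 r "2*a+2"] by simp
          show ?thesis unfolding A2_def h by (simp only: powr_add mult_ac)
        qed
        have z: "2*a + -2*\<tau> + (-2*\<sigma>+2) = 0" "-2*\<sigma> + -2*\<tau> + (2*a+2) = 0" by (auto simp: a_def)
        have sum: "A1 * (c1 * (r/2) powr (-2*\<sigma>+2)) + A2 * (c2 * (2*r) powr (2*a+2)) = C"
          unfolding e1 e2 z C_def using r by simp
        have nn: "0 \<le> c1 * (r/2) powr (-2*\<sigma>+2)" "0 \<le> c2 * (2*r) powr (2*a+2)" using c1 c2 by auto
        show ?thesis unfolding sum[symmetric] using A0 nn
          by (simp add: ennreal_mult'[symmetric] ennreal_plus[symmetric] del: ennreal_plus)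
      qed
      finally show ?thesis .
    qed
  qed
qed



lemma conv_CS:
  fixes F G :: "real^3 \<Rightarrow> ennreal" and p q :: "real^3 \<Rightarrow> real^3 \<Rightarrow> ennreal"
  assumes [measurable]: "F \<in> borel_measurable borel" "G \<in> borel_measurable borel"
    "(\<lambda>(x,y). p x y) \<in> borel_measurable (borel \<Otimes>\<^sub>M borel)" "(\<lambda>(x,y). q x y) \<in> borel_measurable (borel \<Otimes>\<^sub>M borel)"
  and bd: "\<And>\<zeta> \<eta>. (\<integral>\<^sup>+\<xi>. (p \<xi> (\<xi> - \<zeta>))\<^sup>2 * (q \<xi> \<eta>)\<^sup>2 \<partial>lborel) \<le> B"
  shows "(\<integral>\<^sup>+\<xi>. (\<integral>\<^sup>+\<eta>. (F (\<xi> - \<eta>) * p \<xi> \<eta>) * (G \<eta> * q \<xi> \<eta>) \<partial>lborel)\<^sup>2 \<partial>lborel)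
     \<le> B * (\<integral>\<^sup>+\<zeta>. (F \<zeta>)\<^sup>2 \<partial>lborel) * (\<integral>\<^sup>+\<eta>. (G \<eta>)\<^sup>2 \<partial>lborel)"
proof -

  define W where "W = (\<lambda>\<xi> \<zeta> \<eta>. ((F \<zeta>)\<^sup>2 * (p \<xi> (\<xi> - \<zeta>))\<^sup>2) * ((G \<eta>)\<^sup>2 * (q \<xi> \<eta>)\<^sup>2))"
  have Wm[measurable]: "(\<lambda>(\<xi>,\<zeta>,\<eta>). W \<xi> \<zeta> \<eta>) \<in> borel_measurable (lborel \<Otimes>\<^sub>M (lborel \<Otimes>\<^sub>M lborel))"
    unfolding W_def by measurable
  have Wm2[measurable]: "(\<lambda>x. W (fst (fst x)) (snd (fst x)) (snd x)) \<in> borel_measurable ((borel \<Otimes>\<^sub>M borel) \<Otimes>\<^sub>M borel)"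
    unfolding W_def by measurable
  have step1: "(\<integral>\<^sup>+\<eta>. (F (\<xi> - \<eta>) * p \<xi> \<eta>) * (G \<eta> * q \<xi> \<eta>) \<partial>lborel)\<^sup>2 \<le> (\<integral>\<^sup>+\<zeta>. \<integral>\<^sup>+\<eta>. W \<xi> \<zeta> \<eta> \<partial>lborel \<partial>lborel)" for \<xi>
  proof -
    have "(\<integral>\<^sup>+\<eta>. (F (\<xi> - \<eta>) * p \<xi> \<eta>) * (G \<eta> * q \<xi> \<eta>) \<partial>lborel)\<^sup>2
       \<le> (\<integral>\<^sup>+\<eta>. (F (\<xi> - \<eta>) * p \<xi> \<eta>)^2 \<partial>lborel) * (\<integral>\<^sup>+\<eta>. (G \<eta> * q \<xi> \<eta>)^2 \<partial>lborel)"
      by (rule Cauchy_Schwarz_nn_integral) measurable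
    also have "(\<integral>\<^sup>+\<eta>. (F (\<xi> - \<eta>) * p \<xi> \<eta>)^2 \<partial>lborel) = (\<integral>\<^sup>+\<zeta>. (F (\<xi> - (\<xi> - \<zeta>)) * p \<xi> (\<xi> - \<zeta>))^2 \<partial>lborel)"
      by (rule nn_integral_reflect) measurable
    also have "\<dots> = (\<integral>\<^sup>+\<zeta>. (F \<zeta>)\<^sup>2 * (p \<xi> (\<xi> - \<zeta>))\<^sup>2 \<partial>lborel)"
      by (simp add: power_mult_distrib)
    also have "(\<integral>\<^sup>+\<zeta>. (F \<zeta>)\<^sup>2 * (p \<xi> (\<xi> - \<zeta>))\<^sup>2 \<partial>lborel) * (\<integral>\<^sup>+\<eta>. (G \<eta> * q \<xi> \<eta>)^2 \<partial>lborel)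
       = (\<integral>\<^sup>+\<zeta>. (F \<zeta>)\<^sup>2 * (p \<xi> (\<xi> - \<zeta>))\<^sup>2 * (\<integral>\<^sup>+\<eta>. (G \<eta> * q \<xi> \<eta>)^2 \<partial>lborel) \<partial>lborel)"
      by (rule nn_integral_multc[symmetric]) measurable
    also have "\<dots> = (\<integral>\<^sup>+\<zeta>. \<integral>\<^sup>+\<eta>. W \<xi> \<zeta> \<eta> \<partial>lborel \<partial>lborel)"
      unfolding W_def by (intro nn_integral_cong, subst nn_integral_cmult[symmetric]) (auto simp: power_mult_distrib)
    finally show ?thesis .
  qed
  have "(\<integral>\<^sup>+\<xi>. (\<integral>\<^sup>+\<eta>. (F (\<xi> - \<eta>) * p \<xi> \<eta>) * (G \<eta> * q \<xi> \<eta>) \<partial>lborel)\<^sup>2 \<partial>lborel)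
     \<le> (\<integral>\<^sup>+\<xi>. \<integral>\<^sup>+\<zeta>. \<integral>\<^sup>+\<eta>. W \<xi> \<zeta> \<eta> \<partial>lborel \<partial>lborel \<partial>lborel)"
    by (intro nn_integral_mono step1)
  also have "\<dots> = (\<integral>\<^sup>+\<zeta>. \<integral>\<^sup>+\<xi>. \<integral>\<^sup>+\<eta>. W \<xi> \<zeta> \<eta> \<partial>lborel \<partial>lborel \<partial>lborel)"
    by (rule lborel_pair.Fubini'[symmetric]) measurable
  also have "\<dots> = (\<integral>\<^sup>+\<zeta>. \<integral>\<^sup>+\<eta>. \<integral>\<^sup>+\<xi>. W \<xi> \<zeta> \<eta> \<partial>lborel \<partial>lborel \<partial>lborel)"
  proof (rule nn_integral_cong)
    fix \<zeta>
    show "(\<integral>\<^sup>+\<xi>. \<integral>\<^sup>+\<eta>. W \<xi> \<zeta> \<eta> \<partial>lborel \<partial>lborel) = (\<integral>\<^sup>+\<eta>. \<integral>\<^sup>+\<xi>. W \<xi> \<zeta> \<eta> \<partial>lborel \<partial>lborel)"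
      by (rule lborel_pair.Fubini'[symmetric, of "\<lambda>\<xi> \<eta>. W \<xi> \<zeta> \<eta>"]) (unfold W_def, measurable)
  qed
  also have "\<dots> \<le> (\<integral>\<^sup>+\<zeta>. \<integral>\<^sup>+\<eta>. B * ((F \<zeta>)\<^sup>2 * (G \<eta>)\<^sup>2) \<partial>lborel \<partial>lborel)"
  proof (intro nn_integral_mono)
    fix \<zeta> \<eta>
    have "(\<integral>\<^sup>+\<xi>. W \<xi> \<zeta> \<eta> \<partial>lborel) = (\<integral>\<^sup>+\<xi>. ((F \<zeta>)\<^sup>2 * (G \<eta>)\<^sup>2) * ((p \<xi> (\<xi> - \<zeta>))\<^sup>2 * (q \<xi> \<eta>)\<^sup>2) \<partial>lborel)"
      unfolding W_def by (simp add: mult_ac)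
    also have "\<dots> = ((F \<zeta>)\<^sup>2 * (G \<eta>)\<^sup>2) * (\<integral>\<^sup>+\<xi>. (p \<xi> (\<xi> - \<zeta>))\<^sup>2 * (q \<xi> \<eta>)\<^sup>2 \<partial>lborel)"
      by (rule nn_integral_cmult) measurable
    also have "\<dots> \<le> ((F \<zeta>)\<^sup>2 * (G \<eta>)\<^sup>2) * B"
      by (intro mult_left_mono bd) simp
    finally show "(\<integral>\<^sup>+\<xi>. W \<xi> \<zeta> \<eta> \<partial>lborel) \<le> B * ((F \<zeta>)\<^sup>2 * (G \<eta>)\<^sup>2)" by (simp add: mult_ac)
  qed
  also have "\<dots> = B * (\<integral>\<^sup>+\<zeta>. (F \<zeta>)\<^sup>2 \<partial>lborel) * (\<integral>\<^sup>+\<eta>. (G \<eta>)\<^sup>2 \<partial>lborel)"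
  proof -
    have "(\<integral>\<^sup>+\<zeta>. \<integral>\<^sup>+\<eta>. B * ((F \<zeta>)\<^sup>2 * (G \<eta>)\<^sup>2) \<partial>lborel \<partial>lborel) = (\<integral>\<^sup>+\<zeta>. (B * (F \<zeta>)\<^sup>2) * (\<integral>\<^sup>+\<eta>. (G \<eta>)\<^sup>2 \<partial>lborel) \<partial>lborel)"
      by (intro nn_integral_cong, subst nn_integral_cmult[symmetric]) (auto simp: mult_ac)
    also have "\<dots> = (\<integral>\<^sup>+\<zeta>. B * (F \<zeta>)\<^sup>2 \<partial>lborel) * (\<integral>\<^sup>+\<eta>. (G \<eta>)\<^sup>2 \<partial>lborel)"
      by (rule nn_integral_multc) measurable
    also have "\<dots> = B * (\<integral>\<^sup>+\<zeta>. (F \<zeta>)\<^sup>2 \<partial>lborel) * (\<integral>\<^sup>+\<eta>. (G \<eta>)\<^sup>2 \<partial>lborel)"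
      by (subst nn_integral_cmult) auto
    finally show ?thesis .
  qed
  finally show ?thesis .
qed



definition hp :: "real^3 \<Rightarrow> real \<times> real" where "hp x = (x$1, x$2)"

lemma hp_diff[simp]: "hp (x - y) = hp x - hp y" by (simp add: hp_def)
lemma hp_meas[measurable]: "hp \<in> borel_measurable borel" unfolding hp_def by measurable

definition c3 :: "real^3 \<Rightarrow> real" where "c3 x = x$3"
lemma c3_diff[simp]: "c3 (x - y) = c3 x - c3 y" by (simp add: c3_def)
lemma c3_meas[measurable]: "c3 \<in> borel_measurable borel" unfolding c3_def by measurable

definition hker :: "real \<Rightarrow> real \<Rightarrow> real^3 \<Rightarrow> real^3 \<Rightarrow> real" where
  "hker \<sigma>1 \<sigma>2 \<xi> \<eta> = norm (hp \<xi>) powr (2*(\<sigma>1+\<sigma>2-1)) * norm (hp \<xi> - hp \<eta>) powr (-2*\<sigma>1) * norm (hp \<eta>) powr (-2*\<sigma>2)"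

definition vker :: "real \<Rightarrow> real^3 \<Rightarrow> real^3 \<Rightarrow> real" where
  "vker s \<xi> \<eta> = (1+(c3 \<xi>)\<^sup>2) powr s * (1+(c3 \<xi>-c3 \<eta>)\<^sup>2) powr (-s) * (1+(c3 \<eta>)\<^sup>2) powr (-s)"

definition ind1 :: "real^3 \<Rightarrow> real^3 \<Rightarrow> real" where
  "ind1 \<xi> \<eta> = (if norm (hp \<xi> - hp \<eta>) \<le> norm (hp \<eta>) then 1 else 0)"

definition hbf :: "real \<Rightarrow> real \<Rightarrow> real\<times>real \<Rightarrow> real\<times>real \<Rightarrow> ennreal" where
  "hbf \<sigma> \<tau> v u = ennreal (norm u powr (2*(\<sigma>+\<tau>-1)) * norm (u-v) powr (-2*\<sigma>) * norm v powr (-2*\<tau>)) * indicator {u. norm (u-v) \<le> norm v} u"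

lemma hker_nonneg: "hker \<sigma>1 \<sigma>2 \<xi> \<eta> \<ge> 0" by (simp add: hker_def)
lemma vker_nonneg: "vker s \<xi> \<eta> \<ge> 0" by (simp add: vker_def)

lemma hker_meas[measurable]: "(\<lambda>(x,y). hker \<sigma>1 \<sigma>2 x y) \<in> borel_measurable (borel \<Otimes>\<^sub>M borel)"
  unfolding hker_def by measurable
lemma vker_meas[measurable]: "(\<lambda>(x,y). vker s x y) \<in> borel_measurable (borel \<Otimes>\<^sub>M borel)"
  unfolding vker_def by measurable
lemma ind1_meas[measurable]: "(\<lambda>(x,y). ind1 x y) \<in> borel_measurable (borel \<Otimes>\<^sub>M borel)"
  unfolding ind1_def by measurable

lemma vker_bound:
  assumes s: "s > 0"
  shows "vker s \<xi> \<eta> \<le> 4 powr s * ((1+(c3 \<xi>-c3 \<eta>)\<^sup>2) powr (-s) + (1+(c3 \<eta>)\<^sup>2) powr (-s))"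
proof -
  define X where "X = 1+(c3 \<xi>)\<^sup>2"
  define P where "P = 1+(c3 \<xi>-c3 \<eta>)\<^sup>2"
  define Q where "Q = 1+(c3 \<eta>)\<^sup>2"
  have P1: "P \<ge> 1" and Q1: "Q \<ge> 1" by (auto simp: P_def Q_def)
  have sq: "(c3 \<xi>)\<^sup>2 \<le> 2*(c3 \<xi>-c3 \<eta>)\<^sup>2 + 2*(c3 \<eta>)\<^sup>2"
    by (smt (verit) sum_squares_bound power2_diff power2_sum)
  have XM: "X \<le> 4 * max P Q" using sq by (auto simp: X_def P_def Q_def max_def)
  have "X powr s \<le> (4 * max P Q) powr s" using XM s by (intro powr_mono2) (auto simp: X_def)
  also have "\<dots> = 4 powr s * max P Q powr s" by (simp add: powr_mult)
  finally have Xs: "X powr s \<le> 4 powr s * max P Q powr s" .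
  have "vker s \<xi> \<eta> = X powr s * P powr (-s) * Q powr (-s)" by (simp add: vker_def X_def P_def Q_def)
  also have "\<dots> \<le> (4 powr s * max P Q powr s) * P powr (-s) * Q powr (-s)"
    using Xs by (intro mult_right_mono) auto
  also have "\<dots> \<le> 4 powr s * (P powr (-s) + Q powr (-s))"
  proof (cases "P \<le> Q")
    case True
    then have m: "max P Q = Q" by simp
    have e: "Q powr s * Q powr (-s) = 1" using Q1 by (simp add: powr_add[symmetric])
    have "(4 powr s * Q powr s) * P powr (-s) * Q powr (-s) = 4 powr s * P powr (-s) * (Q powr s * Q powr (-s))"
      by (simp only: mult_ac)
    also have "\<dots> = 4 powr s * P powr (-s)" using e by simp
    also have "\<dots> \<le> 4 powr s * (P powr (-s) + Q powr (-s))" by (intro mult_left_mono) auto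
    finally show ?thesis unfolding m .
  next
    case False
    then have m: "max P Q = P" by simp
    have e: "P powr s * P powr (-s) = 1" using P1 by (simp add: powr_add[symmetric])
    have "(4 powr s * P powr s) * P powr (-s) * Q powr (-s) = 4 powr s * Q powr (-s) * (P powr s * P powr (-s))"
      by (simp only: mult_ac)
    also have "\<dots> = 4 powr s * Q powr (-s)" using e by simp
    also have "\<dots> \<le> 4 powr s * (P powr (-s) + Q powr (-s))" by (intro mult_left_mono) auto
    finally show ?thesis unfolding m .
  qed
  finally show ?thesis by (simp add: P_def Q_def)
qed



lemma hbf_meas[measurable]: "hbf \<sigma> \<tau> v \<in> borel_measurable borel"
proof -
  have [measurable]: "Measurable.pred borel (\<lambda>u. u \<in> {u. norm (u - v) \<le> norm v})" by simp
  show ?thesis unfolding hbf_def[abs_def] by measurable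
qed

lemma bracket:
  fixes X :: "real^3 \<Rightarrow> ennreal"
  assumes Xle: "\<And>\<xi>. X \<xi> \<le> hbf \<sigma> \<tau> v (hp \<xi>) * ennreal ((1+(c3 \<xi> - c)\<^sup>2) powr (-s))"
    and CH: "(\<integral>\<^sup>+u. hbf \<sigma> \<tau> v u \<partial>lborel) \<le> ennreal CH"
  shows "(\<integral>\<^sup>+\<xi>. X \<xi> \<partial>lborel) \<le> ennreal CH * (\<integral>\<^sup>+t. ennreal ((1+t\<^sup>2) powr (-s)) \<partial>lborel)"
proof -
  have "(\<integral>\<^sup>+\<xi>. X \<xi> \<partial>lborel) \<le> (\<integral>\<^sup>+(\<xi>::real^3). hbf \<sigma> \<tau> v (\<xi>$1, \<xi>$2) * ennreal ((1+(\<xi>$3 - c)\<^sup>2) powr (-s)) \<partial>lborel)"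
    using Xle by (intro nn_integral_mono) (simp add: hp_def c3_def)
  also have "\<dots> = (\<integral>\<^sup>+u. hbf \<sigma> \<tau> v u \<partial>lborel) * (\<integral>\<^sup>+t. ennreal ((1+(t - c)\<^sup>2) powr (-s)) \<partial>lborel)"
    by (rule nn_integral_split3) auto
  also have "(\<integral>\<^sup>+t. ennreal ((1+(t - c)\<^sup>2) powr (-s)) \<partial>lborel) = (\<integral>\<^sup>+t. ennreal ((1+t\<^sup>2) powr (-s)) \<partial>lborel)"
    by (rule nn_integral_translate[where h="\<lambda>t. ennreal ((1+t\<^sup>2) powr (-s))"]) simp
  also have "(\<integral>\<^sup>+u. hbf \<sigma> \<tau> v u \<partial>lborel) * (\<integral>\<^sup>+t. ennreal ((1+t\<^sup>2) powr (-s)) \<partial>lborel)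
      \<le> ennreal CH * (\<integral>\<^sup>+t. ennreal ((1+t\<^sup>2) powr (-s)) \<partial>lborel)"
    by (intro mult_right_mono CH) simp
  finally show ?thesis .
qed

lemma sq_sum2_ennreal: "((a::ennreal) + b)\<^sup>2 \<le> 2 * (a\<^sup>2 + b\<^sup>2)"
proof -
  have "2 * a * b \<le> a\<^sup>2 + b\<^sup>2" by (rule sum_of_squares_ge_ennreal)
  then have "(a + b)\<^sup>2 \<le> a\<^sup>2 + b\<^sup>2 + (a\<^sup>2 + b\<^sup>2)"
    by (simp add: power2_sum add_mono add.assoc add.left_commute add.commute)
  also have "\<dots> = 2 * (a\<^sup>2 + b\<^sup>2)" by (simp add: mult_2)
  finally show ?thesis .
qed

lemma sq_sum4_ennreal: "((a::ennreal) + b + c + d)\<^sup>2 \<le> 4 * (a\<^sup>2 + b\<^sup>2 + c\<^sup>2 + d\<^sup>2)"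
proof -
  have "((a + b) + (c + d))\<^sup>2 \<le> 2 * ((a+b)\<^sup>2 + (c+d)\<^sup>2)" by (rule sq_sum2_ennreal)
  also have "\<dots> \<le> 2 * (2 * (a\<^sup>2 + b\<^sup>2) + 2 * (c\<^sup>2 + d\<^sup>2))"
    by (intro mult_left_mono add_mono sq_sum2_ennreal) auto
  also have "\<dots> = 4 * (a\<^sup>2 + b\<^sup>2 + c\<^sup>2 + d\<^sup>2)" by (simp add: algebra_simps)
  finally show ?thesis by (simp add: add.assoc)
qed

lemma K_split_real:
  fixes \<xi> \<eta> :: "real^3"
  assumes s: "s > 0"
  defines "P \<equiv> (1+(c3 \<xi> - c3 \<eta>)\<^sup>2) powr (-s)" and "Q \<equiv> (1+(c3 \<eta>)\<^sup>2) powr (-s)"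
  shows "sqrt (hker \<sigma>1 \<sigma>2 \<xi> \<eta> * vker s \<xi> \<eta>) \<le> 2 powr s * (
      sqrt (hker \<sigma>1 \<sigma>2 \<xi> \<eta>) * ind1 \<xi> \<eta> * sqrt P + sqrt Q * (sqrt (hker \<sigma>1 \<sigma>2 \<xi> \<eta>) * ind1 \<xi> \<eta>)
    + sqrt (hker \<sigma>1 \<sigma>2 \<xi> \<eta>) * (1 - ind1 \<xi> \<eta>) * sqrt P + sqrt (hker \<sigma>1 \<sigma>2 \<xi> \<eta>) * (1 - ind1 \<xi> \<eta>) * sqrt Q)"
proof -
  define h where "h = hker \<sigma>1 \<sigma>2 \<xi> \<eta>"
  have h0: "h \<ge> 0" by (simp add: h_def hker_nonneg)
  have P0: "P \<ge> 0" and Q0: "Q \<ge> 0" by (auto simp: P_def Q_def)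
  have "sqrt (h * vker s \<xi> \<eta>) \<le> sqrt (h * (4 powr s * (P + Q)))"
    using vker_bound[OF s, of \<xi> \<eta>] h0 unfolding P_def Q_def c3_def
    by (intro real_sqrt_le_mono mult_left_mono) (auto simp: c3_def)
  also have "\<dots> = sqrt h * sqrt (4 powr s) * sqrt (P + Q)" by (simp add: real_sqrt_mult)
  also have "sqrt (4 powr s) = 2 powr s"
  proof -
    have "(4::real) powr s = (2 powr s)\<^sup>2"
      by (simp add: power2_eq_square powr_mult[symmetric])
    then show ?thesis by simp
  qed
  also have "sqrt h * 2 powr s * sqrt (P + Q) \<le> sqrt h * 2 powr s * (sqrt P + sqrt Q)"
    using sqrt_add_le_add_sqrt[OF P0 Q0] h0 by (intro mult_left_mono) auto
  also have "sqrt h * 2 powr s * (sqrt P + sqrt Q) = 2 powr s * (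
      sqrt h * ind1 \<xi> \<eta> * sqrt P + sqrt Q * (sqrt h * ind1 \<xi> \<eta>)
    + sqrt h * (1 - ind1 \<xi> \<eta>) * sqrt P + sqrt h * (1 - ind1 \<xi> \<eta>) * sqrt Q)"
    by (simp add: algebra_simps)
  finally show ?thesis by (simp add: h_def)
qed



lemma ind1_01: "ind1 \<xi> \<eta> = 0 \<or> ind1 \<xi> \<eta> = 1" by (simp add: ind1_def)

lemma hk1: "ennreal (hker \<sigma>1 \<sigma>2 \<xi> \<eta> * ind1 \<xi> \<eta>) = hbf \<sigma>1 \<sigma>2 (hp \<eta>) (hp \<xi>)"
  by (simp add: hker_def ind1_def hbf_def indicator_def)

lemma hk2: "ennreal (hker \<sigma>1 \<sigma>2 \<xi> (\<xi>-\<zeta>) * (1 - ind1 \<xi> (\<xi>-\<zeta>))) \<le> hbf \<sigma>2 \<sigma>1 (hp \<zeta>) (hp \<xi>)"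
proof (cases "norm (hp \<zeta>) \<le> norm (hp \<xi> - hp \<zeta>)")
  case True
  then show ?thesis by (simp add: ind1_def)
next
  case False
  then have "ennreal (hker \<sigma>1 \<sigma>2 \<xi> (\<xi>-\<zeta>) * (1 - ind1 \<xi> (\<xi>-\<zeta>))) = hbf \<sigma>2 \<sigma>1 (hp \<zeta>) (hp \<xi>)"
    by (simp add: hker_def ind1_def hbf_def indicator_def add.commute mult_ac)
  then show ?thesis by simp
qed


lemma four_sum: "(y::ennreal) + y + y + y = 4 * y"
proof -
  have "(4::ennreal) * y = (1 + 1 + 1 + 1) * y" by simp
  also have "\<dots> = y + y + y + y" by (simp only: distrib_right mult_1)
  finally show ?thesis by simp
qed

lemma main_est:
  fixes s \<sigma>1 \<sigma>2 :: real
  assumes s: "s > 1/2" and s1: "\<sigma>1 < 1" and s2: "\<sigma>2 < 1" and s12: "\<sigma>1 + \<sigma>2 > 0"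
  shows "\<exists>Cst. Cst < \<infinity> \<and> (\<forall>F G. F \<in> borel_measurable borel \<longrightarrow> G \<in> borel_measurable borel \<longrightarrow>
     (\<integral>\<^sup>+\<xi>. (\<integral>\<^sup>+\<eta>. F (\<xi> - \<eta>) * G \<eta> * ennreal (sqrt (hker \<sigma>1 \<sigma>2 \<xi> \<eta> * vker s \<xi> \<eta>)) \<partial>lborel)\<^sup>2 \<partial>lborel)
       \<le> Cst * (\<integral>\<^sup>+\<zeta>. (F \<zeta>)\<^sup>2 \<partial>lborel) * (\<integral>\<^sup>+\<eta>. (G \<eta>)\<^sup>2 \<partial>lborel))"
proof -
  obtain CH1 where CH1: "\<And>v. (\<integral>\<^sup>+u. hbf \<sigma>1 \<sigma>2 v u \<partial>lborel) \<le> ennreal CH1"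
    using horiz_bound[OF s1 s2 s12] unfolding hbf_def by blast
  obtain CH2 where CH2: "\<And>v. (\<integral>\<^sup>+u. hbf \<sigma>2 \<sigma>1 v u \<partial>lborel) \<le> ennreal CH2"
    using horiz_bound[OF s2 s1] s12 unfolding hbf_def by (auto simp: add.commute)
  define CV where "CV = (\<integral>\<^sup>+t. ennreal ((1+t\<^sup>2) powr (-s)) \<partial>lborel)"
  have CV: "CV < \<infinity>" unfolding CV_def by (rule vert_finite[OF s])
  define B where "B = (ennreal CH1 + ennreal CH2) * CV"
  have B1: "ennreal CH1 * CV \<le> B" "ennreal CH2 * CV \<le> B"
    unfolding B_def by (auto intro!: mult_right_mono simp: add_increasing2 add_increasing)
  have s0: "s > 0" using s by simp
  define PP where "PP = (\<lambda>(\<xi>::real^3) (\<eta>::real^3). (1+(c3 \<xi> - c3 \<eta>)\<^sup>2) powr (-s))"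
  define QQ where "QQ = (\<lambda>(\<xi>::real^3) (\<eta>::real^3). (1+(c3 \<eta>)\<^sup>2) powr (-s))"
  define sh where "sh = (\<lambda>\<xi> \<eta>. sqrt (hker \<sigma>1 \<sigma>2 \<xi> \<eta>))"
  have PPm[measurable]: "(\<lambda>(x,y). PP x y) \<in> borel_measurable (borel \<Otimes>\<^sub>M borel)" unfolding PP_def by measurable
  have QQm[measurable]: "(\<lambda>(x,y). QQ x y) \<in> borel_measurable (borel \<Otimes>\<^sub>M borel)" unfolding QQ_def by measurable
  have shm[measurable]: "(\<lambda>(x,y). sh x y) \<in> borel_measurable (borel \<Otimes>\<^sub>M borel)" unfolding sh_def by measurable
  have PP0: "PP x y \<ge> 0" "QQ x y \<ge> 0" "sh x y \<ge> 0" "hker \<sigma>1 \<sigma>2 x y \<ge> 0" for x y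
    by (auto simp: PP_def QQ_def sh_def hker_nonneg)
  have i01: "ind1 x y * ind1 x y = ind1 x y" "(1 - ind1 x y) * (1 - ind1 x y) = 1 - ind1 x y" "0 \<le> ind1 x y" "0 \<le> 1 - ind1 x y" for x y
    using ind1_01[of x y] by auto
  define p1 where "p1 = (\<lambda>(\<xi>::real^3) (\<eta>::real^3). 1::ennreal)"
  define q1 where "q1 = (\<lambda>\<xi> \<eta>. ennreal (sh \<xi> \<eta> * ind1 \<xi> \<eta> * sqrt (PP \<xi> \<eta>)))"
  define p2 where "p2 = (\<lambda>\<xi> \<eta>. ennreal (sqrt (QQ \<xi> \<eta>)))"
  define q2 where "q2 = (\<lambda>\<xi> \<eta>. ennreal (sh \<xi> \<eta> * ind1 \<xi> \<eta>))"
  define p3 where "p3 = (\<lambda>\<xi> \<eta>. ennreal (sh \<xi> \<eta> * (1 - ind1 \<xi> \<eta>)))"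
  define q3 where "q3 = (\<lambda>\<xi> \<eta>. ennreal (sqrt (PP \<xi> \<eta>)))"
  define p4 where "p4 = (\<lambda>\<xi> \<eta>. ennreal (sh \<xi> \<eta> * (1 - ind1 \<xi> \<eta>) * sqrt (QQ \<xi> \<eta>)))"
  define q4 where "q4 = (\<lambda>(\<xi>::real^3) (\<eta>::real^3). 1::ennreal)"
  have [measurable]: "(\<lambda>(x,y). p1 x y) \<in> borel_measurable (borel \<Otimes>\<^sub>M borel)" unfolding p1_def by measurable
  have [measurable]: "(\<lambda>(x,y). q1 x y) \<in> borel_measurable (borel \<Otimes>\<^sub>M borel)" unfolding q1_def by measurable
  have [measurable]: "(\<lambda>(x,y). p2 x y) \<in> borel_measurable (borel \<Otimes>\<^sub>M borel)" unfolding p2_def by measurable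
  have [measurable]: "(\<lambda>(x,y). q2 x y) \<in> borel_measurable (borel \<Otimes>\<^sub>M borel)" unfolding q2_def by measurable
  have [measurable]: "(\<lambda>(x,y). p3 x y) \<in> borel_measurable (borel \<Otimes>\<^sub>M borel)" unfolding p3_def by measurable
  have [measurable]: "(\<lambda>(x,y). q3 x y) \<in> borel_measurable (borel \<Otimes>\<^sub>M borel)" unfolding q3_def by measurable
  have [measurable]: "(\<lambda>(x,y). p4 x y) \<in> borel_measurable (borel \<Otimes>\<^sub>M borel)" unfolding p4_def by measurable
  have [measurable]: "(\<lambda>(x,y). q4 x y) \<in> borel_measurable (borel \<Otimes>\<^sub>M borel)" unfolding q4_def by measurable
  have br1: "(\<integral>\<^sup>+\<xi>. (p1 \<xi> (\<xi> - \<zeta>))\<^sup>2 * (q1 \<xi> \<eta>)\<^sup>2 \<partial>lborel) \<le> B" for \<zeta> \<eta>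
  proof -
    have "(\<integral>\<^sup>+\<xi>. (p1 \<xi> (\<xi> - \<zeta>))\<^sup>2 * (q1 \<xi> \<eta>)\<^sup>2 \<partial>lborel) \<le> ennreal CH1 * CV"
      unfolding CV_def
    proof (rule bracket[where v="hp \<eta>" and c="c3 \<eta>"])
      fix \<xi>
      have "(p1 \<xi> (\<xi> - \<zeta>))\<^sup>2 * (q1 \<xi> \<eta>)\<^sup>2 = ennreal (hker \<sigma>1 \<sigma>2 \<xi> \<eta> * ind1 \<xi> \<eta>) * ennreal (PP \<xi> \<eta>)"
        using PP0 ind1_01[of \<xi> \<eta>] unfolding p1_def q1_def sh_def
        by (elim disjE) (simp_all add: ennreal_power[symmetric] power_mult_distrib ennreal_mult'[symmetric] mult_ac power2_eq_square)
      also have "\<dots> = hbf \<sigma>1 \<sigma>2 (hp \<eta>) (hp \<xi>) * ennreal ((1+(c3 \<xi> - c3 \<eta>)\<^sup>2) powr (-s))"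
        by (simp add: hk1 PP_def)
      finally show "(p1 \<xi> (\<xi> - \<zeta>))\<^sup>2 * (q1 \<xi> \<eta>)\<^sup>2 \<le> hbf \<sigma>1 \<sigma>2 (hp \<eta>) (hp \<xi>) * ennreal ((1+(c3 \<xi> - c3 \<eta>)\<^sup>2) powr (-s))" by simp
    qed (rule CH1)
    then show ?thesis using B1(1) by (rule order_trans)
  qed
  have br2: "(\<integral>\<^sup>+\<xi>. (p2 \<xi> (\<xi> - \<zeta>))\<^sup>2 * (q2 \<xi> \<eta>)\<^sup>2 \<partial>lborel) \<le> B" for \<zeta> \<eta>
  proof -
    have "(\<integral>\<^sup>+\<xi>. (p2 \<xi> (\<xi> - \<zeta>))\<^sup>2 * (q2 \<xi> \<eta>)\<^sup>2 \<partial>lborel) \<le> ennreal CH1 * CV"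
      unfolding CV_def
    proof (rule bracket[where v="hp \<eta>" and c="c3 \<zeta>"])
      fix \<xi>
      have "(p2 \<xi> (\<xi> - \<zeta>))\<^sup>2 * (q2 \<xi> \<eta>)\<^sup>2 = ennreal (hker \<sigma>1 \<sigma>2 \<xi> \<eta> * ind1 \<xi> \<eta>) * ennreal (QQ \<xi> (\<xi> - \<zeta>))"
        using PP0 ind1_01[of \<xi> \<eta>] unfolding p2_def q2_def sh_def
        by (elim disjE) (simp_all add: ennreal_power[symmetric] power_mult_distrib ennreal_mult'[symmetric] mult_ac power2_eq_square)
      also have "\<dots> = hbf \<sigma>1 \<sigma>2 (hp \<eta>) (hp \<xi>) * ennreal ((1+(c3 \<xi> - c3 \<zeta>)\<^sup>2) powr (-s))"
        by (simp add: hk1 QQ_def)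
      finally show "(p2 \<xi> (\<xi> - \<zeta>))\<^sup>2 * (q2 \<xi> \<eta>)\<^sup>2 \<le> hbf \<sigma>1 \<sigma>2 (hp \<eta>) (hp \<xi>) * ennreal ((1+(c3 \<xi> - c3 \<zeta>)\<^sup>2) powr (-s))" by simp
    qed (rule CH1)
    then show ?thesis using B1(1) by (rule order_trans)
  qed
  have br3: "(\<integral>\<^sup>+\<xi>. (p3 \<xi> (\<xi> - \<zeta>))\<^sup>2 * (q3 \<xi> \<eta>)\<^sup>2 \<partial>lborel) \<le> B" for \<zeta> \<eta>
  proof -
    have "(\<integral>\<^sup>+\<xi>. (p3 \<xi> (\<xi> - \<zeta>))\<^sup>2 * (q3 \<xi> \<eta>)\<^sup>2 \<partial>lborel) \<le> ennreal CH2 * CV"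
      unfolding CV_def
    proof (rule bracket[where v="hp \<zeta>" and c="c3 \<eta>"])
      fix \<xi>
      have "(p3 \<xi> (\<xi> - \<zeta>))\<^sup>2 * (q3 \<xi> \<eta>)\<^sup>2 = ennreal (hker \<sigma>1 \<sigma>2 \<xi> (\<xi> - \<zeta>) * (1 - ind1 \<xi> (\<xi> - \<zeta>))) * ennreal (PP \<xi> \<eta>)"
        using PP0 ind1_01[of \<xi> "\<xi> - \<zeta>"] unfolding p3_def q3_def sh_def
        by (elim disjE) (simp_all add: ennreal_power[symmetric] power_mult_distrib ennreal_mult'[symmetric] mult_ac power2_eq_square)
      also have "\<dots> \<le> hbf \<sigma>2 \<sigma>1 (hp \<zeta>) (hp \<xi>) * ennreal ((1+(c3 \<xi> - c3 \<eta>)\<^sup>2) powr (-s))"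
        unfolding PP_def by (intro mult_right_mono hk2) simp
      finally show "(p3 \<xi> (\<xi> - \<zeta>))\<^sup>2 * (q3 \<xi> \<eta>)\<^sup>2 \<le> hbf \<sigma>2 \<sigma>1 (hp \<zeta>) (hp \<xi>) * ennreal ((1+(c3 \<xi> - c3 \<eta>)\<^sup>2) powr (-s))" .
    qed (rule CH2)
    then show ?thesis using B1(2) by (rule order_trans)
  qed
  have br4: "(\<integral>\<^sup>+\<xi>. (p4 \<xi> (\<xi> - \<zeta>))\<^sup>2 * (q4 \<xi> \<eta>)\<^sup>2 \<partial>lborel) \<le> B" for \<zeta> \<eta>
  proof -
    have "(\<integral>\<^sup>+\<xi>. (p4 \<xi> (\<xi> - \<zeta>))\<^sup>2 * (q4 \<xi> \<eta>)\<^sup>2 \<partial>lborel) \<le> ennreal CH2 * CV"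
      unfolding CV_def
    proof (rule bracket[where v="hp \<zeta>" and c="c3 \<zeta>"])
      fix \<xi>
      have "(p4 \<xi> (\<xi> - \<zeta>))\<^sup>2 * (q4 \<xi> \<eta>)\<^sup>2 = ennreal (hker \<sigma>1 \<sigma>2 \<xi> (\<xi> - \<zeta>) * (1 - ind1 \<xi> (\<xi> - \<zeta>))) * ennreal (QQ \<xi> (\<xi> - \<zeta>))"
        using PP0 ind1_01[of \<xi> "\<xi> - \<zeta>"] unfolding p4_def q4_def sh_def
        by (elim disjE) (simp_all add: ennreal_power[symmetric] power_mult_distrib ennreal_mult'[symmetric] mult_ac power2_eq_square)
      also have "\<dots> \<le> hbf \<sigma>2 \<sigma>1 (hp \<zeta>) (hp \<xi>) * ennreal ((1+(c3 \<xi> - c3 \<zeta>)\<^sup>2) powr (-s))"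
        unfolding QQ_def c3_diff by (intro mult_right_mono hk2) simp
      finally show "(p4 \<xi> (\<xi> - \<zeta>))\<^sup>2 * (q4 \<xi> \<eta>)\<^sup>2 \<le> hbf \<sigma>2 \<sigma>1 (hp \<zeta>) (hp \<xi>) * ennreal ((1+(c3 \<xi> - c3 \<zeta>)\<^sup>2) powr (-s))" .
    qed (rule CH2)
    then show ?thesis using B1(2) by (rule order_trans)
  qed
  have Bfin: "B < \<infinity>" using CV unfolding B_def by (simp add: ennreal_mult_less_top)
  show ?thesis
  proof (intro exI[of _ "(ennreal (2 powr s))\<^sup>2 * 16 * B"] conjI allI impI)
    show "(ennreal (2 powr s))\<^sup>2 * 16 * B < \<infinity>" using Bfin
      by (simp add: ennreal_mult_less_top ennreal_power del: ennreal_numeral)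
  next
    fix F G :: "real^3 \<Rightarrow> ennreal"
    assume Fm[measurable]: "F \<in> borel_measurable borel" and Gm[measurable]: "G \<in> borel_measurable borel"
    define X where "X = (\<lambda>(pp::real^3\<Rightarrow>real^3\<Rightarrow>ennreal) qq \<xi> \<eta>. (F (\<xi> - \<eta>) * pp \<xi> \<eta>) * (G \<eta> * qq \<xi> \<eta>))"
    define T where "T = (\<lambda>pp qq \<xi>. \<integral>\<^sup>+\<eta>. X pp qq \<xi> \<eta> \<partial>lborel)"
    have CSi: "(\<integral>\<^sup>+\<xi>. (T pp qq \<xi>)\<^sup>2 \<partial>lborel) \<le> B * (\<integral>\<^sup>+\<zeta>. (F \<zeta>)\<^sup>2 \<partial>lborel) * (\<integral>\<^sup>+\<eta>. (G \<eta>)\<^sup>2 \<partial>lborel)"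
      if [measurable]: "(\<lambda>(x,y). pp x y) \<in> borel_measurable (borel \<Otimes>\<^sub>M borel)" "(\<lambda>(x,y). qq x y) \<in> borel_measurable (borel \<Otimes>\<^sub>M borel)"
        and br: "\<And>\<zeta> \<eta>. (\<integral>\<^sup>+\<xi>. (pp \<xi> (\<xi> - \<zeta>))\<^sup>2 * (qq \<xi> \<eta>)\<^sup>2 \<partial>lborel) \<le> B" for pp qq
      unfolding T_def X_def by (rule conv_CS) (use br in auto)
    have Tm[measurable]: "(\<lambda>\<xi>. T pp qq \<xi>) \<in> borel_measurable lborel"
      if [measurable]: "(\<lambda>(x,y). pp x y) \<in> borel_measurable (borel \<Otimes>\<^sub>M borel)" "(\<lambda>(x,y). qq x y) \<in> borel_measurable (borel \<Otimes>\<^sub>M borel)" for pp qq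
      unfolding T_def X_def by measurable
    have pw: "F (\<xi> - \<eta>) * G \<eta> * ennreal (sqrt (hker \<sigma>1 \<sigma>2 \<xi> \<eta> * vker s \<xi> \<eta>))
        \<le> ennreal (2 powr s) * (X p1 q1 \<xi> \<eta> + X p2 q2 \<xi> \<eta> + X p3 q3 \<xi> \<eta> + X p4 q4 \<xi> \<eta>)" for \<xi> \<eta>
    proof -
      have t0: "0 \<le> sh \<xi> \<eta> * ind1 \<xi> \<eta> * sqrt (PP \<xi> \<eta>)" "0 \<le> sqrt (QQ \<xi> \<eta>) * (sh \<xi> \<eta> * ind1 \<xi> \<eta>)"
        "0 \<le> sh \<xi> \<eta> * (1 - ind1 \<xi> \<eta>) * sqrt (PP \<xi> \<eta>)" "0 \<le> sh \<xi> \<eta> * (1 - ind1 \<xi> \<eta>) * sqrt (QQ \<xi> \<eta>)"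
        "0 \<le> sh \<xi> \<eta> * ind1 \<xi> \<eta>" "0 \<le> sh \<xi> \<eta> * (1 - ind1 \<xi> \<eta>)"
        using PP0 i01 by auto
      have "ennreal (sqrt (hker \<sigma>1 \<sigma>2 \<xi> \<eta> * vker s \<xi> \<eta>)) \<le> ennreal (2 powr s * (
          sh \<xi> \<eta> * ind1 \<xi> \<eta> * sqrt (PP \<xi> \<eta>) + sqrt (QQ \<xi> \<eta>) * (sh \<xi> \<eta> * ind1 \<xi> \<eta>)
        + sh \<xi> \<eta> * (1 - ind1 \<xi> \<eta>) * sqrt (PP \<xi> \<eta>) + sh \<xi> \<eta> * (1 - ind1 \<xi> \<eta>) * sqrt (QQ \<xi> \<eta>)))"
        unfolding sh_def PP_def QQ_def by (intro ennreal_leI K_split_real s0)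
      also have "\<dots> = ennreal (2 powr s) * (q1 \<xi> \<eta> + p2 \<xi> \<eta> * q2 \<xi> \<eta> + p3 \<xi> \<eta> * q3 \<xi> \<eta> + p4 \<xi> \<eta>)"
        unfolding q1_def p2_def q2_def p3_def q3_def p4_def using t0 PP0
        by (simp add: ennreal_mult'[symmetric] ennreal_plus[symmetric] del: ennreal_plus)
      finally have k: "ennreal (sqrt (hker \<sigma>1 \<sigma>2 \<xi> \<eta> * vker s \<xi> \<eta>)) \<le> ennreal (2 powr s) * (q1 \<xi> \<eta> + p2 \<xi> \<eta> * q2 \<xi> \<eta> + p3 \<xi> \<eta> * q3 \<xi> \<eta> + p4 \<xi> \<eta>)" .
      have "F (\<xi> - \<eta>) * G \<eta> * ennreal (sqrt (hker \<sigma>1 \<sigma>2 \<xi> \<eta> * vker s \<xi> \<eta>)) \<le> F (\<xi> - \<eta>) * G \<eta> * (ennreal (2 powr s) * (q1 \<xi> \<eta> + p2 \<xi> \<eta> * q2 \<xi> \<eta> + p3 \<xi> \<eta> * q3 \<xi> \<eta> + p4 \<xi> \<eta>))"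
        by (intro mult_left_mono k) simp
      also have "\<dots> = ennreal (2 powr s) * (X p1 q1 \<xi> \<eta> + X p2 q2 \<xi> \<eta> + X p3 q3 \<xi> \<eta> + X p4 q4 \<xi> \<eta>)"
        unfolding X_def p1_def q4_def by (simp add: algebra_simps)
      finally show ?thesis .
    qed
    have inner: "(\<integral>\<^sup>+\<eta>. F (\<xi> - \<eta>) * G \<eta> * ennreal (sqrt (hker \<sigma>1 \<sigma>2 \<xi> \<eta> * vker s \<xi> \<eta>)) \<partial>lborel)
       \<le> ennreal (2 powr s) * (T p1 q1 \<xi> + T p2 q2 \<xi> + T p3 q3 \<xi> + T p4 q4 \<xi>)" for \<xi>
    proof -
      have [measurable]: "(\<lambda>\<eta>. X pp qq \<xi> \<eta>) \<in> borel_measurable lborel"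
        if [measurable]: "(\<lambda>(x,y). pp x y) \<in> borel_measurable (borel \<Otimes>\<^sub>M borel)" "(\<lambda>(x,y). qq x y) \<in> borel_measurable (borel \<Otimes>\<^sub>M borel)" for pp qq
        unfolding X_def by measurable
      have "(\<integral>\<^sup>+\<eta>. F (\<xi> - \<eta>) * G \<eta> * ennreal (sqrt (hker \<sigma>1 \<sigma>2 \<xi> \<eta> * vker s \<xi> \<eta>)) \<partial>lborel)
          \<le> (\<integral>\<^sup>+\<eta>. ennreal (2 powr s) * (X p1 q1 \<xi> \<eta> + X p2 q2 \<xi> \<eta> + X p3 q3 \<xi> \<eta> + X p4 q4 \<xi> \<eta>) \<partial>lborel)"
        by (intro nn_integral_mono pw)
      also have "\<dots> = ennreal (2 powr s) * (T p1 q1 \<xi> + T p2 q2 \<xi> + T p3 q3 \<xi> + T p4 q4 \<xi>)"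
        unfolding T_def by (simp add: nn_integral_cmult nn_integral_add)
      finally show ?thesis .
    qed
    have "(\<integral>\<^sup>+\<xi>. (\<integral>\<^sup>+\<eta>. F (\<xi> - \<eta>) * G \<eta> * ennreal (sqrt (hker \<sigma>1 \<sigma>2 \<xi> \<eta> * vker s \<xi> \<eta>)) \<partial>lborel)\<^sup>2 \<partial>lborel)
       \<le> (\<integral>\<^sup>+\<xi>. (ennreal (2 powr s))\<^sup>2 * 4 * ((T p1 q1 \<xi>)\<^sup>2 + (T p2 q2 \<xi>)\<^sup>2 + (T p3 q3 \<xi>)\<^sup>2 + (T p4 q4 \<xi>)\<^sup>2) \<partial>lborel)"
    proof (intro nn_integral_mono)
      fix \<xi>
      have "(\<integral>\<^sup>+\<eta>. F (\<xi> - \<eta>) * G \<eta> * ennreal (sqrt (hker \<sigma>1 \<sigma>2 \<xi> \<eta> * vker s \<xi> \<eta>)) \<partial>lborel)\<^sup>2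
          \<le> (ennreal (2 powr s) * (T p1 q1 \<xi> + T p2 q2 \<xi> + T p3 q3 \<xi> + T p4 q4 \<xi>))\<^sup>2"
        by (intro power_mono_ennreal inner)
      also have "\<dots> = (ennreal (2 powr s))\<^sup>2 * (T p1 q1 \<xi> + T p2 q2 \<xi> + T p3 q3 \<xi> + T p4 q4 \<xi>)\<^sup>2"
        by (simp add: power_mult_distrib)
      also have "\<dots> \<le> (ennreal (2 powr s))\<^sup>2 * (4 * ((T p1 q1 \<xi>)\<^sup>2 + (T p2 q2 \<xi>)\<^sup>2 + (T p3 q3 \<xi>)\<^sup>2 + (T p4 q4 \<xi>)\<^sup>2))"
        by (intro mult_left_mono sq_sum4_ennreal) simp
      finally show "(\<integral>\<^sup>+\<eta>. F (\<xi> - \<eta>) * G \<eta> * ennreal (sqrt (hker \<sigma>1 \<sigma>2 \<xi> \<eta> * vker s \<xi> \<eta>)) \<partial>lborel)\<^sup>2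
          \<le> (ennreal (2 powr s))\<^sup>2 * 4 * ((T p1 q1 \<xi>)\<^sup>2 + (T p2 q2 \<xi>)\<^sup>2 + (T p3 q3 \<xi>)\<^sup>2 + (T p4 q4 \<xi>)\<^sup>2)"
        by (simp add: mult.assoc)
    qed
    also have "\<dots> = (ennreal (2 powr s))\<^sup>2 * 4 * ((\<integral>\<^sup>+\<xi>. (T p1 q1 \<xi>)\<^sup>2 \<partial>lborel) + (\<integral>\<^sup>+\<xi>. (T p2 q2 \<xi>)\<^sup>2 \<partial>lborel)
         + (\<integral>\<^sup>+\<xi>. (T p3 q3 \<xi>)\<^sup>2 \<partial>lborel) + (\<integral>\<^sup>+\<xi>. (T p4 q4 \<xi>)\<^sup>2 \<partial>lborel))"
    proof -
      have [measurable]: "(\<lambda>\<xi>. T p1 q1 \<xi>) \<in> borel_measurable lborel" "(\<lambda>\<xi>. T p2 q2 \<xi>) \<in> borel_measurable lborel"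
        "(\<lambda>\<xi>. T p3 q3 \<xi>) \<in> borel_measurable lborel" "(\<lambda>\<xi>. T p4 q4 \<xi>) \<in> borel_measurable lborel"
        by (rule Tm; measurable)+
      show ?thesis by (simp add: nn_integral_cmult nn_integral_add)
    qed
    also have "\<dots> \<le> (ennreal (2 powr s))\<^sup>2 * 4 * (B * (\<integral>\<^sup>+\<zeta>. (F \<zeta>)\<^sup>2 \<partial>lborel) * (\<integral>\<^sup>+\<eta>. (G \<eta>)\<^sup>2 \<partial>lborel)
         + B * (\<integral>\<^sup>+\<zeta>. (F \<zeta>)\<^sup>2 \<partial>lborel) * (\<integral>\<^sup>+\<eta>. (G \<eta>)\<^sup>2 \<partial>lborel)
         + B * (\<integral>\<^sup>+\<zeta>. (F \<zeta>)\<^sup>2 \<partial>lborel) * (\<integral>\<^sup>+\<eta>. (G \<eta>)\<^sup>2 \<partial>lborel)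
         + B * (\<integral>\<^sup>+\<zeta>. (F \<zeta>)\<^sup>2 \<partial>lborel) * (\<integral>\<^sup>+\<eta>. (G \<eta>)\<^sup>2 \<partial>lborel))"
      by (intro mult_left_mono add_mono CSi br1 br2 br3 br4; measurable)
    also have "\<dots> = (ennreal (2 powr s))\<^sup>2 * 16 * B * (\<integral>\<^sup>+\<zeta>. (F \<zeta>)\<^sup>2 \<partial>lborel) * (\<integral>\<^sup>+\<eta>. (G \<eta>)\<^sup>2 \<partial>lborel)"
      unfolding four_sum by (simp add: mult_ac)
    finally show "(\<integral>\<^sup>+\<xi>. (\<integral>\<^sup>+\<eta>. F (\<xi> - \<eta>) * G \<eta> * ennreal (sqrt (hker \<sigma>1 \<sigma>2 \<xi> \<eta> * vker s \<xi> \<eta>)) \<partial>lborel)\<^sup>2 \<partial>lborel)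
       \<le> (ennreal (2 powr s))\<^sup>2 * 16 * B * (\<integral>\<^sup>+\<zeta>. (F \<zeta>)\<^sup>2 \<partial>lborel) * (\<integral>\<^sup>+\<eta>. (G \<eta>)\<^sup>2 \<partial>lborel)" .
  qed
qed



lemma nh_eq: "((x$1)\<^sup>2 + (x$2)\<^sup>2) powr \<sigma> = norm (hp x) powr (2*\<sigma>)"
proof -
  have "norm (hp x) = ((x$1)\<^sup>2 + (x$2)\<^sup>2) powr (1/2)"
    by (simp add: hp_def norm_Pair powr_half_sqrt)
  then show ?thesis by (simp add: powr_powr)
qed

lemma hweight_eq: "hweight \<sigma> s x = norm (hp x) powr (2*\<sigma>) * (1 + (c3 x)\<^sup>2) powr s"
  by (simp add: hweight_def nh_eq c3_def)

lemma hweight_nonneg: "hweight \<sigma> s x \<ge> 0" by (simp add: hweight_def)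

lemma hweight_meas[measurable]: "hweight \<sigma> s \<in> borel_measurable borel"
  unfolding hweight_eq[abs_def] by measurable

lemma W_id:
  assumes n1: "norm (hp (\<xi> - \<eta>)) > 0" and n2: "norm (hp \<eta>) > 0"
  shows "hweight (\<sigma>1+\<sigma>2-1) s \<xi> = hweight \<sigma>1 s (\<xi> - \<eta>) * hweight \<sigma>2 s \<eta> * (hker \<sigma>1 \<sigma>2 \<xi> \<eta> * vker s \<xi> \<eta>)"
proof -
  define N1 where "N1 = norm (hp \<xi> - hp \<eta>)"
  define N2 where "N2 = norm (hp \<eta>)"
  define Z where "Z = 1 + (c3 \<xi> - c3 \<eta>)\<^sup>2"
  define Y where "Y = 1 + (c3 \<eta>)\<^sup>2"
  have p: "N1 > 0" "N2 > 0" "Z > 0" "Y > 0" using n1 n2 by (auto simp: N1_def N2_def Z_def Y_def add_pos_nonneg)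
  have e1: "N1 powr (2*\<sigma>1) * N1 powr (-2*\<sigma>1) = 1" using p by (simp add: powr_add[symmetric])
  have e2: "N2 powr (2*\<sigma>2) * N2 powr (-2*\<sigma>2) = 1" using p by (simp add: powr_add[symmetric])
  have e3: "Z powr s * Z powr (-s) = 1" using p by (simp add: powr_add[symmetric])
  have e4: "Y powr s * Y powr (-s) = 1" using p by (simp add: powr_add[symmetric])
  have "hweight \<sigma>1 s (\<xi> - \<eta>) * hweight \<sigma>2 s \<eta> * (hker \<sigma>1 \<sigma>2 \<xi> \<eta> * vker s \<xi> \<eta>)
     = norm (hp \<xi>) powr (2*(\<sigma>1+\<sigma>2-1)) * (1 + (c3 \<xi>)\<^sup>2) powr s *
       ((N1 powr (2*\<sigma>1) * N1 powr (-2*\<sigma>1)) * (N2 powr (2*\<sigma>2) * N2 powr (-2*\<sigma>2)) * (Z powr s * Z powr (-s)) * (Y powr s * Y powr (-s)))"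
    unfolding hweight_eq hker_def vker_def N1_def N2_def Z_def Y_def by (simp only: hp_diff c3_diff mult_ac)
  also have "\<dots> = hweight (\<sigma>1+\<sigma>2-1) s \<xi>" unfolding e1 e2 e3 e4 hweight_eq by simp
  finally show ?thesis ..
qed

lemma AE_c1_neq: "AE x in lborel. (x::real^3)$1 \<noteq> c"
proof -
  have "axis 1 (1::real) \<in> (Basis :: (real^3) set)" by (simp add: Basis_vec3)
  from AE_lborel_inner_neq[OF this, of c] show ?thesis by (simp add: inner_axis)
qed

lemma norm_hp_pos: "x$1 \<noteq> 0 \<Longrightarrow> norm (hp x) > 0"
  by (simp add: hp_def zero_prod_def)

lemma conv_bound:
  fixes A B :: "real^3 \<Rightarrow> complex"
  assumes [measurable]: "A \<in> borel_measurable borel" "B \<in> borel_measurable borel"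
  shows "ennreal (sqrt (hweight (\<sigma>1+\<sigma>2-1) s \<xi>)) * (\<integral>\<^sup>+\<eta>. ennreal (cmod (A (\<xi>-\<eta>)) * cmod (B \<eta>)) \<partial>lborel)
    \<le> (\<integral>\<^sup>+\<eta>. ennreal (sqrt (hweight \<sigma>1 s (\<xi>-\<eta>)) * cmod (A (\<xi>-\<eta>))) * ennreal (sqrt (hweight \<sigma>2 s \<eta>) * cmod (B \<eta>))
          * ennreal (sqrt (hker \<sigma>1 \<sigma>2 \<xi> \<eta> * vker s \<xi> \<eta>)) \<partial>lborel)"
proof -
  have "ennreal (sqrt (hweight (\<sigma>1+\<sigma>2-1) s \<xi>)) * (\<integral>\<^sup>+\<eta>. ennreal (cmod (A (\<xi>-\<eta>)) * cmod (B \<eta>)) \<partial>lborel)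
     = (\<integral>\<^sup>+\<eta>. ennreal (sqrt (hweight (\<sigma>1+\<sigma>2-1) s \<xi>)) * ennreal (cmod (A (\<xi>-\<eta>)) * cmod (B \<eta>)) \<partial>lborel)"
    by (rule nn_integral_cmult[symmetric]) measurable
  also have "\<dots> \<le> (\<integral>\<^sup>+\<eta>. ennreal (sqrt (hweight \<sigma>1 s (\<xi>-\<eta>)) * cmod (A (\<xi>-\<eta>))) * ennreal (sqrt (hweight \<sigma>2 s \<eta>) * cmod (B \<eta>))
          * ennreal (sqrt (hker \<sigma>1 \<sigma>2 \<xi> \<eta> * vker s \<xi> \<eta>)) \<partial>lborel)"
  proof (rule nn_integral_mono_AE)
    have "AE \<eta> in lborel. (\<eta>::real^3)$1 \<noteq> \<xi>$1" by (rule AE_c1_neq)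
    moreover have "AE \<eta> in lborel. (\<eta>::real^3)$1 \<noteq> 0" by (rule AE_c1_neq)
    ultimately show "AE \<eta> in lborel. ennreal (sqrt (hweight (\<sigma>1+\<sigma>2-1) s \<xi>)) * ennreal (cmod (A (\<xi>-\<eta>)) * cmod (B \<eta>))
       \<le> ennreal (sqrt (hweight \<sigma>1 s (\<xi>-\<eta>)) * cmod (A (\<xi>-\<eta>))) * ennreal (sqrt (hweight \<sigma>2 s \<eta>) * cmod (B \<eta>))
          * ennreal (sqrt (hker \<sigma>1 \<sigma>2 \<xi> \<eta> * vker s \<xi> \<eta>))"
    proof eventually_elim
      case (elim \<eta>)
      have n1: "norm (hp (\<xi> - \<eta>)) > 0" using elim by (intro norm_hp_pos) simp
      have n2: "norm (hp \<eta>) > 0" using elim by (intro norm_hp_pos) simp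
      have w: "sqrt (hweight (\<sigma>1+\<sigma>2-1) s \<xi>) = sqrt (hweight \<sigma>1 s (\<xi>-\<eta>)) * sqrt (hweight \<sigma>2 s \<eta>) * sqrt (hker \<sigma>1 \<sigma>2 \<xi> \<eta> * vker s \<xi> \<eta>)"
        unfolding W_id[OF n1 n2] by (simp add: real_sqrt_mult)
      have "ennreal (sqrt (hweight (\<sigma>1+\<sigma>2-1) s \<xi>)) * ennreal (cmod (A (\<xi>-\<eta>)) * cmod (B \<eta>))
          = ennreal (sqrt (hweight \<sigma>1 s (\<xi>-\<eta>)) * cmod (A (\<xi>-\<eta>))) * ennreal (sqrt (hweight \<sigma>2 s \<eta>) * cmod (B \<eta>))
          * ennreal (sqrt (hker \<sigma>1 \<sigma>2 \<xi> \<eta> * vker s \<xi> \<eta>))"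
        unfolding w by (simp add: ennreal_mult'[symmetric] hweight_nonneg hker_nonneg vker_nonneg mult_ac)
      then show ?case by simp
    qed
  qed
  finally show ?thesis .
qed



lemma norm_integral_ennreal:
  fixes f :: "'a \<Rightarrow> complex"
  shows "ennreal (cmod (integral\<^sup>L M f)) \<le> (\<integral>\<^sup>+x. ennreal (cmod (f x)) \<partial>M)"
proof (cases "integrable M f")
  case True then show ?thesis by (rule integral_norm_bound_ennreal)
next
  case False then show ?thesis by (simp add: not_integrable_integral_eq)
qed

theorem lemma4p3:
  fixes s \<sigma>1 \<sigma>2 :: real
  assumes "s > 1/2" and "\<sigma>1 < 1" and "\<sigma>2 < 1" and "\<sigma>1 + \<sigma>2 > 0"
  shows "\<exists>C::real. \<forall>(\<Psi>::real^3 \<Rightarrow> real) (ah::real^3 \<Rightarrow> complex) (bh::real^3 \<Rightarrow> complex).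
     locally_bounded \<Psi> \<and> (\<forall>\<xi> \<eta>. \<Psi> \<xi> \<le> \<Psi> (\<xi> - \<eta>) + \<Psi> \<eta>) \<and>
     ah \<in> borel_measurable lborel \<and> bh \<in> borel_measurable lborel \<and>
     fpsi \<Psi> ah \<in> borel_measurable lborel \<and> fpsi \<Psi> bh \<in> borel_measurable lborel \<and>
     inH \<sigma>1 s (fpsi \<Psi> ah) \<and> inH \<sigma>2 s (fpsi \<Psi> bh)
     \<longrightarrow> (AE \<xi> in lborel. integrable lborel (\<lambda>\<eta>. ah (\<xi> - \<eta>) * bh \<eta>)) \<and>
         inH (\<sigma>1 + \<sigma>2 - 1) s (fpsi \<Psi> (prod_hat ah bh)) \<and>
         Hnorm (\<sigma>1 + \<sigma>2 - 1) s (fpsi \<Psi> (prod_hat ah bh))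
           \<le> C * Hnorm \<sigma>1 s (fpsi \<Psi> ah) * Hnorm \<sigma>2 s (fpsi \<Psi> bh)"
proof -
  obtain Cst where Cst: "Cst < \<infinity>" and est: "\<And>F G. F \<in> borel_measurable borel \<Longrightarrow> G \<in> borel_measurable borel \<Longrightarrow>
     (\<integral>\<^sup>+\<xi>. (\<integral>\<^sup>+\<eta>. F (\<xi> - \<eta>) * G \<eta> * ennreal (sqrt (hker \<sigma>1 \<sigma>2 \<xi> \<eta> * vker s \<xi> \<eta>)) \<partial>lborel)\<^sup>2 \<partial>lborel)
       \<le> Cst * (\<integral>\<^sup>+\<zeta>. (F \<zeta>)\<^sup>2 \<partial>lborel) * (\<integral>\<^sup>+\<eta>. (G \<eta>)\<^sup>2 \<partial>lborel)"
    using main_est[OF assms] by blast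
  define c :: real where "c = 1 / (2*pi)^3"
  have c0: "c \<ge> 0" by (simp add: c_def)
  define C where "C = c * sqrt (enn2real Cst)"
  show ?thesis
  proof (intro exI[of _ C] allI impI)
    fix \<Psi> :: "real^3 \<Rightarrow> real" and ah bh :: "real^3 \<Rightarrow> complex"
    assume H: "locally_bounded \<Psi> \<and> (\<forall>\<xi> \<eta>. \<Psi> \<xi> \<le> \<Psi> (\<xi> - \<eta>) + \<Psi> \<eta>) \<and>
     ah \<in> borel_measurable lborel \<and> bh \<in> borel_measurable lborel \<and>
     fpsi \<Psi> ah \<in> borel_measurable lborel \<and> fpsi \<Psi> bh \<in> borel_measurable lborel \<and>
     inH \<sigma>1 s (fpsi \<Psi> ah) \<and> inH \<sigma>2 s (fpsi \<Psi> bh)"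
    define A where "A = fpsi \<Psi> ah"
    define B where "B = fpsi \<Psi> bh"
    have sub: "\<And>\<xi> \<eta>. \<Psi> \<xi> \<le> \<Psi> (\<xi> - \<eta>) + \<Psi> \<eta>" using H by blast
    have [measurable]: "ah \<in> borel_measurable borel" "bh \<in> borel_measurable borel"
      "A \<in> borel_measurable borel" "B \<in> borel_measurable borel" using H by (auto simp: A_def B_def)
    have H1: "Hsq \<sigma>1 s A < \<infinity>" and H2: "Hsq \<sigma>2 s B < \<infinity>" using H by (auto simp: inH_def A_def B_def)
    define F where "F = (\<lambda>\<zeta>. ennreal (sqrt (hweight \<sigma>1 s \<zeta>) * cmod (A \<zeta>)))"
    define G where "G = (\<lambda>\<zeta>. ennreal (sqrt (hweight \<sigma>2 s \<zeta>) * cmod (B \<zeta>)))"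
    have [measurable]: "F \<in> borel_measurable borel" unfolding F_def by measurable
    have [measurable]: "G \<in> borel_measurable borel" unfolding G_def by measurable
    have F2: "(\<integral>\<^sup>+\<zeta>. (F \<zeta>)\<^sup>2 \<partial>lborel) = Hsq \<sigma>1 s A"
      unfolding Hsq_def F_def
      by (intro nn_integral_cong) (simp add: ennreal_power hweight_nonneg power_mult_distrib)
    have G2: "(\<integral>\<^sup>+\<zeta>. (G \<zeta>)\<^sup>2 \<partial>lborel) = Hsq \<sigma>2 s B"
      unfolding Hsq_def G_def
      by (intro nn_integral_cong) (simp add: ennreal_power hweight_nonneg power_mult_distrib)
    define Cv where "Cv = (\<lambda>\<xi>. \<integral>\<^sup>+\<eta>. ennreal (cmod (A (\<xi>-\<eta>)) * cmod (B \<eta>)) \<partial>lborel)"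
    have Cvm[measurable]: "Cv \<in> borel_measurable borel" unfolding Cv_def by measurable
    define w where "w = hweight (\<sigma>1+\<sigma>2-1) s"
    have main: "(\<integral>\<^sup>+\<xi>. (ennreal (sqrt (w \<xi>)) * Cv \<xi>)\<^sup>2 \<partial>lborel) \<le> Cst * Hsq \<sigma>1 s A * Hsq \<sigma>2 s B"
    proof -
      have "(\<integral>\<^sup>+\<xi>. (ennreal (sqrt (w \<xi>)) * Cv \<xi>)\<^sup>2 \<partial>lborel)
         \<le> (\<integral>\<^sup>+\<xi>. (\<integral>\<^sup>+\<eta>. F (\<xi> - \<eta>) * G \<eta> * ennreal (sqrt (hker \<sigma>1 \<sigma>2 \<xi> \<eta> * vker s \<xi> \<eta>)) \<partial>lborel)\<^sup>2 \<partial>lborel)"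
        unfolding w_def Cv_def F_def G_def
        by (intro nn_integral_mono power_mono_ennreal conv_bound) measurable
      also have "\<dots> \<le> Cst * Hsq \<sigma>1 s A * Hsq \<sigma>2 s B"
        using est[of F G] by (simp add: F2 G2)
      finally show ?thesis .
    qed
    have fin: "Cst * Hsq \<sigma>1 s A * Hsq \<sigma>2 s B < \<infinity>" using Cst H1 H2 by (simp add: ennreal_mult_less_top)
    define P where "P = fpsi \<Psi> (prod_hat ah bh)"
    have Pbd: "ennreal (cmod (P \<xi>)) \<le> ennreal c * Cv \<xi>" for \<xi>
    proof -
      have "cmod (P \<xi>) = exp (\<Psi> \<xi>) * c * cmod (\<integral>\<eta>. ah (\<xi> - \<eta>) * bh \<eta> \<partial>lborel)"
        unfolding P_def fpsi_def prod_hat_def c_def by (simp add: norm_mult norm_divide norm_power)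
      then have "ennreal (cmod (P \<xi>)) = ennreal c * (ennreal (exp (\<Psi> \<xi>)) * ennreal (cmod (\<integral>\<eta>. ah (\<xi> - \<eta>) * bh \<eta> \<partial>lborel)))"
        using c0 by (simp add: ennreal_mult'[symmetric] mult_ac)
      also have "\<dots> \<le> ennreal c * (ennreal (exp (\<Psi> \<xi>)) * (\<integral>\<^sup>+\<eta>. ennreal (cmod (ah (\<xi> - \<eta>) * bh \<eta>)) \<partial>lborel))"
        by (intro mult_left_mono norm_integral_ennreal) auto
      also have "ennreal (exp (\<Psi> \<xi>)) * (\<integral>\<^sup>+\<eta>. ennreal (cmod (ah (\<xi> - \<eta>) * bh \<eta>)) \<partial>lborel)
          = (\<integral>\<^sup>+\<eta>. ennreal (exp (\<Psi> \<xi>)) * ennreal (cmod (ah (\<xi> - \<eta>) * bh \<eta>)) \<partial>lborel)"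
        by (rule nn_integral_cmult[symmetric]) measurable
      also have "\<dots> \<le> Cv \<xi>"
        unfolding Cv_def
      proof (intro nn_integral_mono)
        fix \<eta>
        have "exp (\<Psi> \<xi>) \<le> exp (\<Psi> (\<xi>-\<eta>)) * exp (\<Psi> \<eta>)" using sub[of \<xi> \<eta>] by (simp add: exp_add[symmetric])
        then have "exp (\<Psi> \<xi>) * (cmod (ah (\<xi> - \<eta>)) * cmod (bh \<eta>)) \<le> (exp (\<Psi> (\<xi>-\<eta>)) * exp (\<Psi> \<eta>)) * (cmod (ah (\<xi> - \<eta>)) * cmod (bh \<eta>))"
          by (intro mult_right_mono) auto
        also have "\<dots> = cmod (A (\<xi>-\<eta>)) * cmod (B \<eta>)"
          by (simp add: A_def B_def fpsi_def norm_mult)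
        finally show "ennreal (exp (\<Psi> \<xi>)) * ennreal (cmod (ah (\<xi> - \<eta>) * bh \<eta>)) \<le> ennreal (cmod (A (\<xi>-\<eta>)) * cmod (B \<eta>))"
          by (simp add: ennreal_mult'[symmetric] norm_mult ennreal_leI)
      qed
      finally show ?thesis by (simp add: mult_left_mono)
    qed
    have HsqP: "Hsq (\<sigma>1+\<sigma>2-1) s P \<le> ennreal (c\<^sup>2) * (Cst * Hsq \<sigma>1 s A * Hsq \<sigma>2 s B)"
    proof -
      have "Hsq (\<sigma>1+\<sigma>2-1) s P \<le> (\<integral>\<^sup>+\<xi>. ennreal (c\<^sup>2) * (ennreal (sqrt (w \<xi>)) * Cv \<xi>)\<^sup>2 \<partial>lborel)"
        unfolding Hsq_def
      proof (intro nn_integral_mono)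
        fix \<xi>
        have "ennreal (hweight (\<sigma>1+\<sigma>2-1) s \<xi> * (cmod (P \<xi>))\<^sup>2) = (ennreal (sqrt (w \<xi>)) * ennreal (cmod (P \<xi>)))\<^sup>2"
          unfolding w_def by (simp add: ennreal_power hweight_nonneg power_mult_distrib ennreal_mult'[symmetric])
        also have "\<dots> \<le> (ennreal (sqrt (w \<xi>)) * (ennreal c * Cv \<xi>))\<^sup>2"
          by (intro power_mono_ennreal mult_left_mono Pbd) simp
        also have "\<dots> = ennreal (c\<^sup>2) * (ennreal (sqrt (w \<xi>)) * Cv \<xi>)\<^sup>2"
          using c0 by (simp add: power_mult_distrib ennreal_power mult_ac)
        finally show "ennreal (hweight (\<sigma>1+\<sigma>2-1) s \<xi> * (cmod (P \<xi>))\<^sup>2) \<le> ennreal (c\<^sup>2) * (ennreal (sqrt (w \<xi>)) * Cv \<xi>)\<^sup>2" .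
      qed
      also have "\<dots> = ennreal (c\<^sup>2) * (\<integral>\<^sup>+\<xi>. (ennreal (sqrt (w \<xi>)) * Cv \<xi>)\<^sup>2 \<partial>lborel)"
        unfolding w_def by (rule nn_integral_cmult) measurable
      also have "\<dots> \<le> ennreal (c\<^sup>2) * (Cst * Hsq \<sigma>1 s A * Hsq \<sigma>2 s B)"
        by (intro mult_left_mono main) simp
      finally show ?thesis .
    qed
    have finP: "Hsq (\<sigma>1+\<sigma>2-1) s P < \<infinity>"
      using HsqP by (rule le_less_trans) (use fin in \<open>simp add: ennreal_mult_less_top\<close>)
    have Hn: "Hnorm (\<sigma>1 + \<sigma>2 - 1) s P \<le> C * Hnorm \<sigma>1 s A * Hnorm \<sigma>2 s B"
    proof -
      have "enn2real (Hsq (\<sigma>1+\<sigma>2-1) s P) \<le> enn2real (ennreal (c\<^sup>2) * (Cst * Hsq \<sigma>1 s A * Hsq \<sigma>2 s B))"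
        using HsqP fin by (intro enn2real_mono) (auto simp: ennreal_mult_less_top)
      also have "\<dots> = c\<^sup>2 * enn2real Cst * enn2real (Hsq \<sigma>1 s A) * enn2real (Hsq \<sigma>2 s B)"
        by (simp add: enn2real_mult mult_ac)
      finally have "sqrt (enn2real (Hsq (\<sigma>1+\<sigma>2-1) s P)) \<le> sqrt (c\<^sup>2 * enn2real Cst * enn2real (Hsq \<sigma>1 s A) * enn2real (Hsq \<sigma>2 s B))"
        by (rule real_sqrt_le_mono)
      also have "\<dots> = C * Hnorm \<sigma>1 s A * Hnorm \<sigma>2 s B"
        using c0 by (simp add: C_def Hnorm_def real_sqrt_mult)
      finally show ?thesis by (simp add: Hnorm_def)
    qed
    have AEi: "AE \<xi> in lborel. integrable lborel (\<lambda>\<eta>. ah (\<xi> - \<eta>) * bh \<eta>)"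
    proof -
      have "AE \<xi> in lborel. (ennreal (sqrt (w \<xi>)) * Cv \<xi>)\<^sup>2 \<noteq> \<infinity>"
      proof (rule nn_integral_PInf_AE)
        show "(\<lambda>\<xi>. (ennreal (sqrt (w \<xi>)) * Cv \<xi>)\<^sup>2) \<in> borel_measurable lborel" unfolding w_def by measurable
        show "(\<integral>\<^sup>+\<xi>. (ennreal (sqrt (w \<xi>)) * Cv \<xi>)\<^sup>2 \<partial>lborel) \<noteq> \<infinity>" using le_less_trans[OF main fin] by simp
      qed
      moreover have "AE \<xi> in lborel. (\<xi>::real^3)$1 \<noteq> 0" by (rule AE_c1_neq)
      ultimately show ?thesis
      proof eventually_elim
        case (elim \<xi>)
        have "norm (hp \<xi>) > 0" using elim by (intro norm_hp_pos) simp
        moreover have "1 + (c3 \<xi>)\<^sup>2 > 0" by (simp add: add_pos_nonneg)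
        ultimately have wpos: "w \<xi> > 0" unfolding w_def hweight_eq by (intro mult_pos_pos) (simp_all add: powr_gt_zero)
        have "Cv \<xi> \<noteq> \<infinity>" using elim(1) wpos by (auto simp: ennreal_mult_eq_top_iff power_eq_top_ennreal)
        have "(\<integral>\<^sup>+\<eta>. ennreal (norm (ah (\<xi> - \<eta>) * bh \<eta>)) \<partial>lborel) \<le> (\<integral>\<^sup>+\<eta>. ennreal (exp (- \<Psi> \<xi>)) * ennreal (cmod (A (\<xi>-\<eta>)) * cmod (B \<eta>)) \<partial>lborel)"
        proof (intro nn_integral_mono)
          fix \<eta>
          have "exp (- \<Psi> (\<xi>-\<eta>)) * exp (- \<Psi> \<eta>) \<le> exp (- \<Psi> \<xi>)" using sub[of \<xi> \<eta>] by (simp add: exp_add[symmetric])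
          then have "(exp (- \<Psi> (\<xi>-\<eta>)) * exp (- \<Psi> \<eta>)) * (cmod (A (\<xi>-\<eta>)) * cmod (B \<eta>)) \<le> exp (- \<Psi> \<xi>) * (cmod (A (\<xi>-\<eta>)) * cmod (B \<eta>))"
            by (intro mult_right_mono) auto
          moreover have "(exp (- \<Psi> (\<xi>-\<eta>)) * exp (- \<Psi> \<eta>)) * (cmod (A (\<xi>-\<eta>)) * cmod (B \<eta>)) = norm (ah (\<xi> - \<eta>) * bh \<eta>)"
            by (simp add: A_def B_def fpsi_def norm_mult exp_minus field_simps)
          ultimately show "ennreal (norm (ah (\<xi> - \<eta>) * bh \<eta>)) \<le> ennreal (exp (- \<Psi> \<xi>)) * ennreal (cmod (A (\<xi>-\<eta>)) * cmod (B \<eta>))"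
            by (simp add: ennreal_mult'[symmetric] ennreal_leI)
        qed
        also have "\<dots> = ennreal (exp (- \<Psi> \<xi>)) * Cv \<xi>" unfolding Cv_def by (rule nn_integral_cmult) measurable
        also have "\<dots> < \<infinity>" using \<open>Cv \<xi> \<noteq> \<infinity>\<close> by (simp add: ennreal_mult_less_top less_top)
        finally show ?case by (intro integrableI_bounded) measurable
      qed
    qed
    show "(AE \<xi> in lborel. integrable lborel (\<lambda>\<eta>. ah (\<xi> - \<eta>) * bh \<eta>)) \<and>
         inH (\<sigma>1 + \<sigma>2 - 1) s (fpsi \<Psi> (prod_hat ah bh)) \<and>
         Hnorm (\<sigma>1 + \<sigma>2 - 1) s (fpsi \<Psi> (prod_hat ah bh))
           \<le> C * Hnorm \<sigma>1 s (fpsi \<Psi> ah) * Hnorm \<sigma>2 s (fpsi \<Psi> bh)"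
      using AEi finP Hn unfolding P_def A_def B_def inH_def by blast
  qed
qed


end
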